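(* Assume the joint regression model (M), the regularity conditions (A-1), (A-2), (A-3), and that for some constant $d_0>0$ and for all $\theta\in\bar U_{d_0}(\theta_0)$ the following moments are finite (all suprema over $\tau,\tilde\tau\in\bar U_{d_0}(\theta_0)$): $\mathbb{E}[\|X\|^3(\sup_\tau G_1^{(1)}(X'\tau^q))(\sup_{\tilde\tau}G_1^{(2)}(X'\tilde\tau^q))]$, $\mathbb{E}[\|X\|^3(\sup_\tau G_1^{(1)}(X'\tau^q))(\sup_{\tilde\tau}G_2^{(1)}(X'\tilde\tau^e))]$, $\mathbb{E}[\|X\|^3(\sup_\tau G_2(X'\tau^e))(\sup_{\tilde\tau}G_1^{(2)}(X'\tilde\tau^q))]$, $\mathbb{E}[\|X\|^3(\sup_\tau G_2(X'\tau^e))(\sup_{\tilde\tau}G_2^{(1)}(X'\tilde\tau^e))]$, $\mathbb{E}[\|X\|^3\sup_\tau(G_1^{(1)}(X'\tau^q))^2]$, $\mathbb{E}[\|X\|^3\sup_\tau(G_2(X'\tau^e))^2]$, $\mathbb{E}[\|X\|^3\sup_\tau G_1^{(1)}(X'\tau^q)G_2(X'\tau^e)]$, $\mathbb{E}[\|X\|^5(\sup_\tau G_2^{(1)}(X'\tau^e))(\sup_{\tilde\tau}G_2^{(2)}(X'\tilde\tau^e))]$, $\mathbb{E}[\|X\|^5(\sup_\tau G_2^{(1)}(X'\tau^e))^2]$, $\mathbb{E}[\|X\|^4(\sup_\tau G_2^{(1)}(X'\tau^e))(\sup_{\tilde\tau}G_2^{(2)}(X'\tilde\tau^e))\mathbb{E}[|Y|\mid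 X]]$, $\mathbb{E}[\|X\|^3G_2^{(1)}(X'\theta^e)(\sup_\tau G_2^{(1)}(X'\tau^e))\mathbb{E}[|Y|\mid X]]$, $\mathbb{E}[\|X\|^3G_2^{(1)}(X'\theta^e)(\sup_\tau G_2^{(2)}(X'\tau^e))\mathbb{E}[Y^2\mid X]]$, $\mathbb{E}[\|X\|^3(\sup_\tau G_2^{(1)}(X'\tau^e))(\sup_{\tilde\tau}G_2^{(2)}(X'\tilde\tau^e))\mathbb{E}[Y^2\mid X]]$. Let $\lambda(\theta)=\mathbb{E}[\psi(Y,X,\theta)]$. Then there are strictly positive numbers $a,d_0$ such that $\|\lambda(\theta)\|\ge a\cdot\|\theta-\theta_0\|$ for all $\theta\in\Theta$ with $\|\theta-\theta_0\|\le d_0$.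
   Context: Fix $\alpha\in(0,1)$ and $k\in\mathbb{N}$. Let $(\Omega,\mathcal F,P)$ be a complete probability space and $Y:\Omega\to\mathbb{R}$, $X:\Omega\to\mathbb{R}^k$ random variables. For a real random variable $Z$ with distribution function $F$, $Q_\alpha(Z)=\inf\{z\in\mathbb{R}:F(z)\ge\alpha\}$ and $\mathrm{ES}_\alpha(Z)=\frac1\alpha\int_0^\alpha Q_u(Z)\,\mathrm{d}u$; $Q_\alpha(\cdot\mid X)$ and $\mathrm{ES}_\alpha(\cdot\mid X)$ denote these functionals of the conditional distribution given $X$. $F_{Y|X}$ and $f_{Y|X}$ denote the conditional distribution function and density of $Y$ given $X$. Vectors $\theta\in\mathbb{R}^{2k}$ are written $\theta=(\theta^{q\prime},\theta^{e\prime})'$ with $\theta^q,\theta^e\in\mathbb{R}^k$. $\|\cdot\|$ is the maximum norm on vectors. $\bar U_d(\theta)=\{\tau\in\Theta:\|\tau-\theta\|\le d\}$. $G^{(j)}$ denotes the $j$-th derivative of a real function $G$. Model (M): $Y=X'\theta^q_0+u^q$ and $Y=X'\theta^e_0+u^e$ where $Q_\alpha(u^q\mid X)=0$ and $\mathrm{ES}_\alpha(u^e\mid X)=0$; $\theta_0=(\theta_0^{q\prime},\theta_0^{e\prime})'\in\Theta$, where $\Theta\subset\mathbb{R}^{2k}$ is compact with nonempty interior. (A-1): $(Y_i,X_i)$, $i=1,\dots,n$, are iid with the distribution of $(Y,X)$; the conditional distribution $F_{Y|X}$ has finite second moments and is absolutely continuous with density $f_{Y|X}$ that is strictly positive, continuous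 and bounded in a neighbourhood of $X'\theta^q_0$. (A-2): $\mathbb{E}[XX']$ is positive definite. (A-3): $G_1$ is twice continuously differentiable, increasing and integrable; $\mathcal G_2$ is three times continuously differentiable with $\mathcal G_2^{(1)}=G_2$, and $G_2$ and $G_2^{(1)}$ are strictly positive; $a$ is integrable. The estimating function is $\psi=(\psi_1',\psi_2')'$ with $\psi_1(Y,X,\theta)=\frac1\alpha(\mathbf 1_{\{Y\le X'\theta^q\}}-\alpha)\big(\alpha XG_1^{(1)}(X'\theta^q)+XG_2(X'\theta^e)\big)$ and $\psi_2(Y,X,\theta)=XG_2^{(1)}(X'\theta^e)\big(X'\theta^e-X'\theta^q+\frac1\alpha(X'\theta^q-Y)\mathbf 1_{\{Y\le X'\theta^q\}}\big)$. *)

theory Defs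
  imports "HOL-Probability.Probability"
begin

definition maxnorm :: "real^'k \<Rightarrow> real" where
  "maxnorm v = Max (range (\<lambda>i. \<bar>v $ i\<bar>))"

definition maxnorm2 :: "(real^'k) \<times> (real^'k) \<Rightarrow> real" where
  "maxnorm2 p = max (maxnorm (fst p)) (maxnorm (snd p))"

definition Ubar :: "((real^'k) \<times> (real^'k)) set \<Rightarrow> real \<Rightarrow> (real^'k) \<times> (real^'k)
    \<Rightarrow> ((real^'k) \<times> (real^'k)) set" where
  "Ubar Th d th = {\<tau>\<in>Th. maxnorm2 (\<tau> - th) \<le> d}"

definition quantile :: "(real \<Rightarrow> real) \<Rightarrow> real \<Rightarrow> real" where
  "quantile F u = Inf {z. u \<le> F z}"

definition expected_shortfall :: "(real \<Rightarrow> real) \<Rightarrow> real \<Rightarrow> real" where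
  "expected_shortfall F \<alpha> = (1 / \<alpha>) * (LBINT u=0..\<alpha>. quantile F u)"

definition cond_cdf :: "(real^'k \<Rightarrow> real \<Rightarrow> real) \<Rightarrow> real^'k \<Rightarrow> real \<Rightarrow> real" where
  "cond_cdf f x z = (LINT y:{..z}|lborel. f x y)"

text \<open>\<open>f\<close> is a conditional density of \<open>Y\<close> given \<open>X\<close>: the joint law of \<open>(X,Y)\<close>
  has density \<open>f\<close> w.r.t. (law of \<open>X\<close>) \<open>\<otimes>\<close> Lebesgue measure.\<close>
definition is_cond_density :: "'a measure \<Rightarrow> ('a \<Rightarrow> real^'k) \<Rightarrow> ('a \<Rightarrow> real)
    \<Rightarrow> (real^'k \<Rightarrow> real \<Rightarrow> real) \<Rightarrow> bool" where
  "is_cond_density M X Y f \<longleftrightarrow>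
     (\<lambda>(x, y). f x y) \<in> borel_measurable (borel \<Otimes>\<^sub>M borel) \<and> (\<forall>x y. 0 \<le> f x y) \<and>
     distr M (borel \<Otimes>\<^sub>M borel) (\<lambda>\<omega>. (X \<omega>, Y \<omega>))
       = density (distr M borel X \<Otimes>\<^sub>M lborel) (\<lambda>(x, y). ennreal (f x y))"

definition pos_def :: "real^'k^'k \<Rightarrow> bool" where
  "pos_def A \<longleftrightarrow> (\<forall>v. v \<noteq> 0 \<longrightarrow> 0 < v \<bullet> (A *v v))"

text \<open>The estimating function \<open>\<psi> = (\<psi>\<^sub>1, \<psi>\<^sub>2)\<close>; \<open>G1d = G\<^sub>1\<^sup>(\<^sup>1\<^sup>)\<close>,
  \<open>G2d = G\<^sub>2\<^sup>(\<^sup>1\<^sup>)\<close>.\<close>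
definition psi1 :: "real \<Rightarrow> (real \<Rightarrow> real) \<Rightarrow> (real \<Rightarrow> real) \<Rightarrow> real \<Rightarrow> real^'k
    \<Rightarrow> (real^'k) \<times> (real^'k) \<Rightarrow> real^'k" where
  "psi1 \<alpha> G1d G2 y x th =
     ((1 / \<alpha>) * ((if y \<le> x \<bullet> fst th then 1 else 0) - \<alpha>)
       * (\<alpha> * G1d (x \<bullet> fst th) + G2 (x \<bullet> snd th))) *\<^sub>R x"

definition psi2 :: "real \<Rightarrow> (real \<Rightarrow> real) \<Rightarrow> real \<Rightarrow> real^'k
    \<Rightarrow> (real^'k) \<times> (real^'k) \<Rightarrow> real^'k" where
  "psi2 \<alpha> G2d y x th =
     (G2d (x \<bullet> snd th) * (x \<bullet> snd th - x \<bullet> fst th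
        + (1 / \<alpha>) * (x \<bullet> fst th - y) * (if y \<le> x \<bullet> fst th then 1 else 0))) *\<^sub>R x"

end

theory Submission
  imports Defs
begin

locale dens1 =
  fixes p :: "real \<Rightarrow> real"
  assumes pm[measurable]: "p \<in> borel_measurable borel" and pnn: "\<And>y. 0 \<le> p y"
    and pint: "integrable lborel p" and p1: "integral\<^sup>L lborel p = 1"
begin

definition "mu = density lborel (\<lambda>y. ennreal (p y))"
definition "F t = (LINT y:{..t}|lborel. p y)"

lemma rd: "real_distribution mu"
proof -
  have "emeasure (density lborel (\<lambda>y. ennreal (p y))) UNIV = (\<integral>\<^sup>+ y. ennreal (p y) \<partial>lborel)"
    by (subst emeasure_density) auto
  also have "\<dots> = ennreal (integral\<^sup>L lborel p)"
    by (rule nn_integral_eq_integral[OF pint]) (simp add: pnn)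
  finally have "emeasure (density lborel (\<lambda>y. ennreal (p y))) UNIV = 1" using p1 by simp
  then show ?thesis unfolding mu_def
    by (intro real_distribution.intro prob_spaceI real_distribution_axioms.intro) auto
qed

lemma int_ind: "integrable lborel (\<lambda>y. p y * indicator A y)" if "A \<in> sets borel"
  using integrable_mult_indicator[OF _ pint, of A] that by (simp add: mult.commute)

lemma F_cdf: "F t = cdf mu t"
proof -
  have ii: "integrable lborel (\<lambda>y. indicator {..t} y *\<^sub>R p y)"
    by (rule integrable_mult_indicator) (auto simp: pint)
  have "cdf mu t = enn2real (emeasure mu {..t})"
    by (simp add: cdf_def2 measure_def)
  also have "emeasure mu {..t} = (\<integral>\<^sup>+ y. ennreal (indicator {..t} y *\<^sub>R p y) \<partial>lborel)"
    unfolding mu_def by (subst emeasure_density) (auto intro!: nn_integral_cong split: split_indicator)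
  also have "\<dots> = ennreal (LINT y|lborel. indicator {..t} y *\<^sub>R p y)"
    by (rule nn_integral_eq_integral[OF ii]) (simp add: pnn)
  finally show ?thesis
    by (simp add: F_def set_lebesgue_integral_def pnn integral_nonneg_AE)
qed

lemma F_mono: "a \<le> b \<Longrightarrow> F a \<le> F b"
  using real_distribution.finite_borel_measure_M[OF rd]
  by (simp add: F_cdf finite_borel_measure.cdf_nondecreasing)

lemma F_nonneg: "0 \<le> F a"
  using real_distribution.finite_borel_measure_M[OF rd]
  by (simp add: F_cdf finite_borel_measure.cdf_nonneg)

lemma F_le1: "F a \<le> 1"
  using rd by (simp add: F_cdf real_distribution.cdf_bounded_prob)

lemma F_top: "(F \<longlongrightarrow> 1) at_top"
proof -
  have "F = cdf mu" using F_cdf by auto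
  then show ?thesis using real_distribution.cdf_lim_at_top_prob[OF rd] by simp
qed

lemma F_bot: "(F \<longlongrightarrow> 0) at_bot"
proof -
  have "F = cdf mu" using F_cdf by auto
  then show ?thesis
    using finite_borel_measure.cdf_lim_at_bot[OF real_distribution.finite_borel_measure_M[OF rd]] by simp
qed

lemma F_cont: "isCont F x"
proof -
  have "emeasure mu {x} = (\<integral>\<^sup>+ y. ennreal (p y) * indicator {x} y \<partial>lborel)"
    unfolding mu_def by (subst emeasure_density) auto
  also have "\<dots> = 0"
    by (subst nn_integral_0_iff_AE) (use AE_lborel_singleton[of x] in \<open>auto elim!: eventually_mono\<close>)
  finally have "measure mu {x} = 0" by (simp add: measure_def)
  moreover have "F = cdf mu" using F_cdf by auto
  ultimately show ?thesis
    using finite_borel_measure.isCont_cdf[OF real_distribution.finite_borel_measure_M[OF rd]] by simp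
qed

lemma F_diff: "a \<le> b \<Longrightarrow> F b - F a = (LINT y|lborel. p y * indicator {a<..b} y)"
proof -
  assume ab: "a \<le> b"
  have "F b = (LINT y|lborel. p y * indicator {..a} y + p y * indicator {a<..b} y)"
    unfolding F_def set_lebesgue_integral_def
    by (rule Bochner_Integration.integral_cong) (use ab in \<open>auto simp: indicator_def\<close>)
  also have "\<dots> = (LINT y|lborel. p y * indicator {..a} y) + (LINT y|lborel. p y * indicator {a<..b} y)"
    by (rule Bochner_Integration.integral_add; rule int_ind; simp)
  finally show ?thesis unfolding F_def set_lebesgue_integral_def by (simp add: mult.commute)
qed

lemma qset_ne: assumes "u < 1" shows "{z. u \<le> F z} \<noteq> {}"
proof -
  have "eventually (\<lambda>z. u < F z) at_top"
    using order_tendstoD(1)[OF F_top assms] .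
  then obtain z where "u < F z" by (metis eventually_at_top_linorder order_refl)
  then show ?thesis by (auto intro: less_imp_le)
qed

lemma qset_bdd: assumes "0 < u" shows "bdd_below {z. u \<le> F z}"
proof -
  have "eventually (\<lambda>z. F z < u) at_bot"
    using order_tendstoD(2)[OF F_bot assms] .
  then obtain b where b: "\<And>z. z \<le> b \<Longrightarrow> F z < u" by (metis eventually_at_bot_linorder)
  show ?thesis
  proof (rule bdd_belowI)
    fix x assume "x \<in> {z. u \<le> F z}"
    then show "b \<le> x" using b[of x] by (cases "x \<le> b") auto
  qed
qed

lemma q_galois:
  assumes u: "0 < u" "u < 1"
  shows "quantile F u \<le> s \<longleftrightarrow> u \<le> F s"
proof
  assume "u \<le> F s"
  then show "quantile F u \<le> s"
    unfolding quantile_def by (intro cInf_lower qset_bdd u) auto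
next
  assume qs: "quantile F u \<le> s"
  define q where "q = quantile F u"
  have "(F \<longlongrightarrow> F q) (at_right q)"
    using F_cont[of q] by (simp add: isCont_def filterlim_at_split)
  moreover have "eventually (\<lambda>z. u \<le> F z) (at_right q)"
  proof -
    have "u \<le> F z" if "q < z" for z
    proof -
      have "Inf {z. u \<le> F z} < z" using that by (simp add: q_def quantile_def)
      then obtain w where "w \<in> {z. u \<le> F z}" "w < z"
        using cInf_less_iff[OF qset_ne[OF u(2)] qset_bdd[OF u(1)]] by auto
      then show ?thesis using F_mono[of w z] by auto
    qed
    then show ?thesis by (auto simp: eventually_at_right_less eventually_at_filter intro: eventually_at_rightI[of q "q+1"])
  qed
  ultimately have "u \<le> F q"
    by (intro tendsto_lowerbound) auto
  then show "u \<le> F s" using F_mono[OF qs[folded q_def]] by auto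
qed

lemma F_at_q:
  assumes u: "0 < u" "u < 1"
  shows "F (quantile F u) = u"
proof -
  define q where "q = quantile F u"
  have ge: "u \<le> F q" using q_galois[OF u, of q] by (simp add: q_def)
  have "(F \<longlongrightarrow> F q) (at_left q)"
    using F_cont[of q] by (simp add: isCont_def filterlim_at_split)
  moreover have "eventually (\<lambda>z. F z \<le> u) (at_left q)"
  proof -
    have "F z \<le> u" if "z < q" for z
      using q_galois[OF u, of z] that by (auto simp: q_def)
    then show ?thesis by (auto intro: eventually_at_leftI[of "q - 1"])
  qed
  ultimately have "F q \<le> u"
    by (intro tendsto_upperbound) auto
  with ge show ?thesis by (simp add: q_def)
qed

lemma F_lower_Ioc:
  assumes ab: "a \<le> b" and c: "\<And>y. a < y \<Longrightarrow> y \<le> b \<Longrightarrow> c \<le> p y"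
  shows "c * (b - a) \<le> F b - F a"
proof -
  have "c * (b - a) = (LINT y|lborel. c * indicator {a<..b} y)"
    using ab by simp
  also have "\<dots> \<le> (LINT y|lborel. p y * indicator {a<..b} y)"
  proof (rule integral_mono)
    show "integrable lborel (\<lambda>y. c * indicator {a<..b} y)" using ab by (intro integrable_mult_right integrable_real_indicator) auto
    show "integrable lborel (\<lambda>y. p y * indicator {a<..b} y)" by (rule int_ind) simp
    fix y show "c * indicator {a<..b} y \<le> p y * indicator {a<..b} y"
      using c[of y] by (auto simp: indicator_def)
  qed
  also have "\<dots> = F b - F a" using F_diff[OF ab] by simp
  finally show ?thesis .
qed

lemma F_lower:
  assumes cont: "isCont p q" and pos: "0 < p q"
  shows "\<exists>c>0. \<exists>e>0. \<forall>s. \<bar>s\<bar> \<le> e \<longrightarrow> c * s\<^sup>2 \<le> s * (F (q + s) - F q)"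
proof -
  have "eventually (\<lambda>y. dist (p y) (p q) < p q / 2) (at q)"
  proof -
    have "\<forall>e>0. eventually (\<lambda>y. dist (p y) (p q) < e) (at q)"
      using cont unfolding isCont_def tendsto_iff by simp
    then show ?thesis using pos by (meson half_gt_zero)
  qed
  then obtain d where d: "d > 0" "\<And>y. y \<noteq> q \<Longrightarrow> dist y q < d \<Longrightarrow> dist (p y) (p q) < p q / 2"
    unfolding eventually_at by blast
  have low: "p q / 2 \<le> p y" if "\<bar>y - q\<bar> < d" for y
  proof (cases "y = q")
    case True then show ?thesis using pos by simp
  next
    case False
    then have "dist (p y) (p q) < p q / 2" using d(2)[of y] that by (simp add: dist_real_def)
    then show ?thesis unfolding dist_real_def by linarith
  qed
  show ?thesis
  proof (intro exI conjI allI impI)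
    show "0 < p q / 2" "0 < d / 2" using pos d by auto
    fix s :: real assume s: "\<bar>s\<bar> \<le> d / 2"
    show "p q / 2 * s\<^sup>2 \<le> s * (F (q + s) - F q)"
    proof (cases "0 \<le> s")
      case True
      have "p q / 2 * (q + s - q) \<le> F (q + s) - F q"
      proof (rule F_lower_Ioc)
        show "q \<le> q + s" using True by simp
        fix y assume "q < y" "y \<le> q + s"
        then show "p q / 2 \<le> p y" using s d by (intro low) auto
      qed
      then have "s * (p q / 2 * s) \<le> s * (F (q + s) - F q)"
        using True by (intro mult_left_mono) auto
      then show ?thesis by (simp add: power2_eq_square mult.assoc mult.left_commute)
    next
      case False
      have "p q / 2 * (q - (q + s)) \<le> F q - F (q + s)"
      proof (rule F_lower_Ioc)
        show "q + s \<le> q" using False by simp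
        fix y assume "q + s < y" "y \<le> q"
        then show "p q / 2 \<le> p y" using s d by (intro low) auto
      qed
      then have "(-s) * (p q / 2 * (-s)) \<le> (-s) * (F q - F (q + s))"
        using False by (intro mult_left_mono) auto
      then show ?thesis by (simp add: power2_eq_square algebra_simps)
    qed
  qed
qed

end

locale dens2 = dens1 +
  assumes ymom: "integrable lborel (\<lambda>y. y * p y)"
begin

definition "H t = (LINT y|lborel. p y * ((t - y) * indicator {..t} y))"

lemma H_int: "integrable lborel (\<lambda>y. p y * ((t - y) * indicator {..t} y))"
proof (rule Bochner_Integration.integrable_bound)
  show "integrable lborel (\<lambda>y. \<bar>t\<bar> * p y + \<bar>y * p y\<bar>)"
    using pint ymom by auto
  show "AE y in lborel. norm (p y * ((t - y) * indicator {..t} y)) \<le> norm (\<bar>t\<bar> * p y + \<bar>y * p y\<bar>)"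
  proof (intro AE_I2)
    fix y
    have "\<bar>p y * ((t - y) * indicator {..t} y)\<bar> \<le> p y * \<bar>t - y\<bar>"
      using pnn[of y] by (auto simp: indicator_def abs_mult)
    also have "\<dots> \<le> p y * (\<bar>t\<bar> + \<bar>y\<bar>)" using pnn[of y] by (intro mult_left_mono) auto
    finally show "norm (p y * ((t - y) * indicator {..t} y)) \<le> norm (\<bar>t\<bar> * p y + \<bar>y * p y\<bar>)"
      using pnn[of y] by (simp add: abs_mult algebra_simps)
  qed
qed auto

lemma F_int: "F a = (LINT y|lborel. p y * indicator {..a} y)"
  unfolding F_def set_lebesgue_integral_def by (simp add: mult.commute)

lemma H_incr:
  assumes ab: "a \<le> b"
  shows "(b - a) * F a \<le> H b - H a" "H b - H a \<le> (b - a) * F b"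
proof -
  have e: "H b - H a = (LINT y|lborel. p y * ((b - y) * indicator {..b} y) - p y * ((a - y) * indicator {..a} y))"
    unfolding H_def by (rule Bochner_Integration.integral_diff[symmetric]; rule H_int)
  have "(b - a) * F a = (LINT y|lborel. (b - a) * (p y * indicator {..a} y))"
    unfolding F_int by simp
  also have "\<dots> \<le> (LINT y|lborel. p y * ((b - y) * indicator {..b} y) - p y * ((a - y) * indicator {..a} y))"
  proof (rule integral_mono)
    show "integrable lborel (\<lambda>y. (b - a) * (p y * indicator {..a} y))" using int_ind[of "{..a}"] by simp
    show "integrable lborel (\<lambda>y. p y * ((b - y) * indicator {..b} y) - p y * ((a - y) * indicator {..a} y))"
      using H_int by auto
    fix y show "(b - a) * (p y * indicator {..a} y) \<le> p y * ((b - y) * indicator {..b} y) - p y * ((a - y) * indicator {..a} y)"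
      using pnn[of y] ab by (auto simp: indicator_def algebra_simps) (simp add: mult_right_mono)
  qed
  finally show "(b - a) * F a \<le> H b - H a" using e by simp
  have "H b - H a \<le> (LINT y|lborel. (b - a) * (p y * indicator {..b} y))"
    unfolding e
  proof (rule integral_mono)
    show "integrable lborel (\<lambda>y. (b - a) * (p y * indicator {..b} y))" using int_ind[of "{..b}"] by simp
    show "integrable lborel (\<lambda>y. p y * ((b - y) * indicator {..b} y) - p y * ((a - y) * indicator {..a} y))"
      using H_int by auto
    fix y show "p y * ((b - y) * indicator {..b} y) - p y * ((a - y) * indicator {..a} y) \<le> (b - a) * (p y * indicator {..b} y)"
      using pnn[of y] ab by (auto simp: indicator_def algebra_simps) (simp add: mult_right_mono)
  qed
  also have "\<dots> = (b - a) * F b" unfolding F_int by simp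
  finally show "H b - H a \<le> (b - a) * F b" .
qed

lemma H_incr2:
  "0 \<le> H (q + s) - H q - s * F q \<and> H (q + s) - H q - s * F q \<le> s * (F (q + s) - F q)"
proof (cases "0 \<le> s")
  case True
  then show ?thesis using H_incr[of q "q + s"] by (auto simp: algebra_simps)
next
  case False
  then show ?thesis using H_incr[of "q + s" q] by (auto simp: algebra_simps)
qed

lemma F_meas[measurable]: "F \<in> borel_measurable borel"
  by (intro borel_measurable_continuous_onI continuous_at_imp_continuous_on ballI F_cont)

lemma q_mono: assumes "0 < u" "u \<le> v" "v < 1" shows "quantile F u \<le> quantile F v"
proof -
  have "v \<le> F (quantile F v)" using q_galois[of v "quantile F v"] assms by simp
  then have "u \<le> F (quantile F v)" using assms by simp
  then show ?thesis using q_galois[of u "quantile F v"] assms by simp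
qed

lemma q_meas:
  assumes a: "0 < a" "a < 1"
  shows "(\<lambda>u. indicator {0<..<a} u * quantile F u) \<in> borel_measurable borel"
proof -
  have "mono_on {0<..<a} (quantile F)"
    by (rule mono_onI) (use a in \<open>auto intro!: q_mono\<close>)
  then have "quantile F \<in> borel_measurable (restrict_space borel {0<..<a})"
    by (rule borel_measurable_mono_on_fnc)
  then have "(\<lambda>u. indicator {0<..<a} u *\<^sub>R quantile F u) \<in> borel_measurable borel"
    by (subst borel_measurable_restrict_space_iff[symmetric]) auto
  then show ?thesis by simp
qed

lemma H_ES:
  fixes a :: real assumes a: "0 < a" "a < 1"
  shows "H (quantile F a) = a * quantile F a - (LBINT u=0..a. quantile F u)"
proof -
  define Q where "Q = quantile F a"
  have FQ: "F Q = a" using F_at_q[OF a] Q_def by simp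
  have Fle: "F s \<le> a" if "s < Q" for s using F_mono[of s Q] that FQ by simp
  have A: "(\<integral>\<^sup>+s. ennreal (indicator {..<Q} s * F s) \<partial>lborel) = ennreal (H Q)"
  proof -
    have "ennreal (H Q) = (\<integral>\<^sup>+ y. ennreal (p y * ((Q - y) * indicator {..Q} y)) \<partial>lborel)"
      unfolding H_def
      by (rule nn_integral_eq_integral[symmetric]) (use H_int[of Q] in \<open>auto intro!: mult_nonneg_nonneg pnn simp: indicator_def\<close>)
    also have "\<dots> = (\<integral>\<^sup>+ y. \<integral>\<^sup>+ s. ennreal (p y * (if y \<le> s then 1 else 0) * (if s < Q then 1 else 0)) \<partial>lborel \<partial>lborel)"
    proof (rule nn_integral_cong)
      fix y
      have "(\<integral>\<^sup>+ s. ennreal (p y * (if y \<le> s then 1 else 0) * (if s < Q then 1 else 0)) \<partial>lborel)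
          = (\<integral>\<^sup>+ s. ennreal (p y) * indicator {y..<Q} s \<partial>lborel)"
        by (intro nn_integral_cong) (auto simp: indicator_def)
      also have "\<dots> = ennreal (p y) * emeasure lborel {y..<Q}"
        by (subst nn_integral_cmult_indicator) auto
      also have "\<dots> = ennreal (p y * ((Q - y) * indicator {..Q} y))"
        using pnn[of y] by (cases "y \<le> Q") (auto simp: ennreal_mult[symmetric])
      finally show "ennreal (p y * ((Q - y) * indicator {..Q} y)) = (\<integral>\<^sup>+ s. ennreal (p y * (if y \<le> s then 1 else 0) * (if s < Q then 1 else 0)) \<partial>lborel)"
        by simp
    qed
    also have "\<dots> = (\<integral>\<^sup>+ s. \<integral>\<^sup>+ y. ennreal (p y * (if y \<le> s then 1 else 0) * (if s < Q then 1 else 0)) \<partial>lborel \<partial>lborel)"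
      by (rule lborel_pair.Fubini'[symmetric]) measurable
    also have "\<dots> = (\<integral>\<^sup>+s. ennreal (indicator {..<Q} s * F s) \<partial>lborel)"
    proof (rule nn_integral_cong)
      fix s
      show "(\<integral>\<^sup>+ y. ennreal (p y * (if y \<le> s then 1 else 0) * (if s < Q then 1 else 0)) \<partial>lborel) = ennreal (indicator {..<Q} s * F s)"
      proof (cases "s < Q")
        case True
        have "(\<integral>\<^sup>+ y. ennreal (p y * (if y \<le> s then 1 else 0) * (if s < Q then 1 else 0)) \<partial>lborel) = (\<integral>\<^sup>+ y. ennreal (p y * indicator {..s} y) \<partial>lborel)"
          using True by (intro nn_integral_cong) auto
        also have "\<dots> = ennreal (F s)" unfolding F_int
          by (rule nn_integral_eq_integral) (auto intro!: int_ind mult_nonneg_nonneg pnn)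
        finally show ?thesis using True by simp
      qed auto
    qed
    finally show ?thesis by simp
  qed
  have B: "(\<integral>\<^sup>+ u. ennreal (indicator {0<..<a} u * (Q - quantile F u)) \<partial>lborel) = (\<integral>\<^sup>+s. ennreal (indicator {..<Q} s * F s) \<partial>lborel)"
  proof -
    have "(\<integral>\<^sup>+ u. ennreal (indicator {0<..<a} u * (Q - quantile F u)) \<partial>lborel)
        = (\<integral>\<^sup>+ u. \<integral>\<^sup>+ s. ennreal ((if 0 < u \<and> u < a then 1 else 0) * (if s < Q then 1 else 0) * (if u \<le> F s then 1 else 0)) \<partial>lborel \<partial>lborel)"
    proof (rule nn_integral_cong)
      fix u
      show "ennreal (indicator {0<..<a} u * (Q - quantile F u)) = (\<integral>\<^sup>+ s. ennreal ((if 0 < u \<and> u < a then 1 else 0) * (if s < Q then 1 else 0) * (if u \<le> F s then 1 else 0)) \<partial>lborel)"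
      proof (cases "u \<in> {0<..<a}")
        case True
        then have u: "0 < u" "u < 1" using a by auto
        have qQ: "quantile F u \<le> Q" using q_galois[OF u, of Q] FQ True by simp
        have "(\<integral>\<^sup>+ s. ennreal ((if 0 < u \<and> u < a then 1 else 0) * (if s < Q then 1 else 0) * (if u \<le> F s then 1 else 0)) \<partial>lborel)
            = (\<integral>\<^sup>+ s. indicator {quantile F u..<Q} s \<partial>lborel)"
          using True q_galois[OF u] by (intro nn_integral_cong) (auto simp: indicator_def)
        also have "\<dots> = ennreal (Q - quantile F u)" using qQ by simp
        finally show ?thesis using True by simp
      qed auto
    qed
    also have "\<dots> = (\<integral>\<^sup>+ s. \<integral>\<^sup>+ u. ennreal ((if 0 < u \<and> u < a then 1 else 0) * (if s < Q then 1 else 0) * (if u \<le> F s then 1 else 0)) \<partial>lborel \<partial>lborel)"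
      by (rule lborel_pair.Fubini') measurable
    also have "\<dots> = (\<integral>\<^sup>+s. ennreal (indicator {..<Q} s * F s) \<partial>lborel)"
    proof (rule nn_integral_cong)
      fix s
      show "(\<integral>\<^sup>+ u. ennreal ((if 0 < u \<and> u < a then 1 else 0) * (if s < Q then 1 else 0) * (if u \<le> F s then 1 else 0)) \<partial>lborel) = ennreal (indicator {..<Q} s * F s)"
      proof (cases "s < Q")
        case True
        have Fs: "0 \<le> F s" "F s \<le> a" using F_nonneg Fle[OF True] by auto
        have "(\<integral>\<^sup>+ u. ennreal ((if 0 < u \<and> u < a then 1 else 0) * (if s < Q then 1 else 0) * (if u \<le> F s then 1 else 0)) \<partial>lborel)
            = (\<integral>\<^sup>+ u. indicator ({0<..<a} \<inter> {..F s}) u \<partial>lborel)"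
          using True by (intro nn_integral_cong) (auto simp: indicator_def)
        also have "\<dots> = emeasure lborel ({0<..<a} \<inter> {..F s})" by simp
        also have "\<dots> = ennreal (F s)"
        proof (cases "F s < a")
          case True
          then have "{0<..<a} \<inter> {..F s} = {0<..F s}" by auto
          then show ?thesis using Fs by simp
        next
          case False
          then have "{0<..<a} \<inter> {..F s} = {0<..<a}" using Fs by auto
          then show ?thesis using Fs False by simp
        qed
        finally show ?thesis using True by simp
      qed auto
    qed
    finally show ?thesis .
  qed
  have meas1: "(\<lambda>u. indicator {0<..<a} u * (Q - quantile F u)) \<in> borel_measurable borel"
  proof -
    have "(\<lambda>u. Q * indicator {0<..<a} u - indicator {0<..<a} u * quantile F u) \<in> borel_measurable borel"
      using q_meas[OF a] by measurable
    then show ?thesis by (simp add: algebra_simps)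
  qed
  have nn1: "0 \<le> indicator {0<..<a} u * (Q - quantile F u)" for u
  proof (cases "u \<in> {0<..<a}")
    case True
    then have u: "0 < u" "u < 1" using a by auto
    have "quantile F u \<le> Q" using q_galois[OF u, of Q] FQ True by simp
    then show ?thesis by simp
  qed simp
  have int1: "integrable lborel (\<lambda>u. indicator {0<..<a} u * (Q - quantile F u))"
    by (rule integrableI_nonneg) (use meas1 nn1 A B in auto)
  have "ennreal (LBINT u. indicator {0<..<a} u * (Q - quantile F u)) = ennreal (H Q)"
    using nn_integral_eq_integral[OF int1] nn1 A B by simp
  moreover have "0 \<le> H Q" unfolding H_def
    by (rule integral_nonneg_AE) (auto intro!: mult_nonneg_nonneg pnn simp: indicator_def)
  moreover have "0 \<le> (LBINT u. indicator {0<..<a} u * (Q - quantile F u))"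
    by (rule integral_nonneg_AE) (use nn1 in auto)
  ultimately have e1: "(LBINT u. indicator {0<..<a} u * (Q - quantile F u)) = H Q" by simp
  have int2: "integrable lborel (\<lambda>u. Q * indicator {0<..<a} u)"
    using a by (intro integrable_mult_right integrable_real_indicator) auto
  have "(LBINT u=0..a. quantile F u) = (LBINT u. indicator {0<..<a} u * quantile F u)"
    using a by (simp add: interval_lebesgue_integral_def set_lebesgue_integral_def zero_ereal_def)
  also have "\<dots> = (LBINT u. Q * indicator {0<..<a} u - indicator {0<..<a} u * (Q - quantile F u))"
    by (simp add: algebra_simps)
  also have "\<dots> = (LBINT u. Q * indicator {0<..<a} u) - (LBINT u. indicator {0<..<a} u * (Q - quantile F u))"
    by (rule Bochner_Integration.integral_diff[OF int2 int1])
  also have "\<dots> = a * Q - H Q" using a e1 by simp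
  finally show ?thesis by (simp add: Q_def)
qed


lemma good_facts:
  assumes a: "0 < a" "a < 1" and qQ: "quantile F a = Q" and es: "expected_shortfall F a = E"
    and loc: "\<exists>\<epsilon>>0. (\<forall>y\<in>ball Q \<epsilon>. 0 < p y) \<and> continuous_on (ball Q \<epsilon>) p \<and> bounded (p ` ball Q \<epsilon>)"
  shows "F Q = a" "H Q = a * Q - a * E" "isCont F Q"
    "\<exists>c>0. \<exists>e>0. \<forall>s. \<bar>s\<bar> \<le> e \<longrightarrow> c * s\<^sup>2 \<le> s * (F (Q + s) - F Q)"
proof -
  show FQ: "F Q = a" using F_at_q[OF a] qQ by simp
  have "(LBINT u=0..a. quantile F u) = a * E"
    using es a by (simp add: expected_shortfall_def field_simps)
  then show "H Q = a * Q - a * E" using H_ES[OF a] qQ by simp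
  show "isCont F Q" by (rule F_cont)
  obtain \<epsilon> where e: "\<epsilon> > 0" "\<forall>y\<in>ball Q \<epsilon>. 0 < p y" "continuous_on (ball Q \<epsilon>) p" using loc by blast
  have "isCont p Q" using e continuous_on_eq_continuous_at[of "ball Q \<epsilon>" p] by auto
  moreover have "0 < p Q" using e by auto
  ultimately show "\<exists>c>0. \<exists>e>0. \<forall>s. \<bar>s\<bar> \<le> e \<longrightarrow> c * s\<^sup>2 \<le> s * (F (Q + s) - F Q)"
    by (rule F_lower)
qed

end

locale joint =
  fixes M :: "'a measure" and X :: "'a \<Rightarrow> real^'k" and Y :: "'a \<Rightarrow> real"
    and f :: "real^'k \<Rightarrow> real \<Rightarrow> real"
  assumes prob: "prob_space M" and rvX[measurable]: "X \<in> borel_measurable M"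
    and rvY[measurable]: "Y \<in> borel_measurable M"
    and dens: "is_cond_density M X Y f"
begin

definition "PX = distr M borel X"

lemma f_meas[measurable]: "(\<lambda>(x, y). f x y) \<in> borel_measurable (borel \<Otimes>\<^sub>M borel)"
  using dens by (simp add: is_cond_density_def)

lemma f_meas2[measurable]: "(\<lambda>z. f (fst z) (snd z)) \<in> borel_measurable (borel \<Otimes>\<^sub>M borel)"
  using f_meas by (simp add: case_prod_beta')

lemma f_nn: "0 \<le> f x y"
  using dens by (simp add: is_cond_density_def)

lemma joint_eq: "distr M (borel \<Otimes>\<^sub>M borel) (\<lambda>\<omega>. (X \<omega>, Y \<omega>)) = density (PX \<Otimes>\<^sub>M lborel) (\<lambda>(x, y). ennreal (f x y))"
  using dens by (simp add: is_cond_density_def PX_def)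

lemma PX_prob: "prob_space PX"
  unfolding PX_def by (rule prob_space.prob_space_distr[OF prob]) simp

lemma sets_PX[simp, measurable_cong]: "sets PX = sets borel"
  by (simp add: PX_def)

lemma space_PX[simp]: "space PX = UNIV"
  by (simp add: PX_def)

lemma sets_PXl: "sets (PX \<Otimes>\<^sub>M lborel) = sets (borel \<Otimes>\<^sub>M borel)"
  by (rule sets_pair_measure_cong) auto

lemma pair_sf: "pair_sigma_finite PX lborel"
proof -
  interpret P: prob_space PX by (rule PX_prob)
  show ?thesis by unfold_locales
qed

lemma joint_nn:
  assumes g[measurable]: "g \<in> borel_measurable (borel \<Otimes>\<^sub>M borel)"
  shows "(\<integral>\<^sup>+\<omega>. g (X \<omega>, Y \<omega>) \<partial>M) = (\<integral>\<^sup>+x. \<integral>\<^sup>+y. ennreal (f x y) * g (x, y) \<partial>lborel \<partial>PX)"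
proof -
  have gm: "g \<in> borel_measurable (PX \<Otimes>\<^sub>M lborel)"
    using g by (simp add: measurable_cong_sets[OF sets_PXl refl])
  have fm: "(\<lambda>(x, y). ennreal (f x y)) \<in> borel_measurable (PX \<Otimes>\<^sub>M lborel)"
    using measurable_cong_sets[OF sets_PXl refl] by simp
  have "(\<integral>\<^sup>+\<omega>. g (X \<omega>, Y \<omega>) \<partial>M) = integral\<^sup>N (distr M (borel \<Otimes>\<^sub>M borel) (\<lambda>\<omega>. (X \<omega>, Y \<omega>))) g"
    by (rule nn_integral_distr[symmetric]) auto
  also have "\<dots> = integral\<^sup>N (density (PX \<Otimes>\<^sub>M lborel) (\<lambda>(x, y). ennreal (f x y))) g"
    using joint_eq by simp
  also have "\<dots> = (\<integral>\<^sup>+z. (\<lambda>(x, y). ennreal (f x y)) z * g z \<partial>(PX \<Otimes>\<^sub>M lborel))"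
    by (rule nn_integral_density[OF fm gm])
  also have "\<dots> = (\<integral>\<^sup>+x. \<integral>\<^sup>+y. ennreal (f x y) * g (x, y) \<partial>lborel \<partial>PX)"
    using lborel.nn_integral_fst[of "\<lambda>z. (\<lambda>(x, y). ennreal (f x y)) z * g z" PX] fm gm by simp
  finally show ?thesis .
qed

lemma joint_int:
  fixes g :: "real^'k \<Rightarrow> real \<Rightarrow> real"
  assumes g[measurable]: "(\<lambda>(x, y). g x y) \<in> borel_measurable (borel \<Otimes>\<^sub>M borel)"
    and int: "integrable M (\<lambda>\<omega>. g (X \<omega>) (Y \<omega>))"
  shows "(LINT \<omega>|M. g (X \<omega>) (Y \<omega>)) = (LINT x|PX. LINT y|lborel. f x y * g x y)"
    and "AE x in PX. integrable lborel (\<lambda>y. f x y * g x y)"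
    and "integrable PX (\<lambda>x. LINT y|lborel. f x y * g x y)"
proof -
  interpret P: pair_sigma_finite PX lborel by (rule pair_sf)
  define G where "G = (\<lambda>(x, y). g x y)"
  have Gm[measurable]: "G \<in> borel_measurable (borel \<Otimes>\<^sub>M borel)" using g by (simp add: G_def)
  have Gm2: "G \<in> borel_measurable (PX \<Otimes>\<^sub>M lborel)"
    using Gm by (simp add: measurable_cong_sets[OF sets_PXl refl])
  have fm: "(\<lambda>z. f (fst z) (snd z)) \<in> borel_measurable (PX \<Otimes>\<^sub>M lborel)"
    using measurable_cong_sets[OF sets_PXl refl] by simp
  have "integrable M (\<lambda>\<omega>. G (X \<omega>, Y \<omega>))" using int by (simp add: G_def)
  then have i1: "integrable (distr M (borel \<Otimes>\<^sub>M borel) (\<lambda>\<omega>. (X \<omega>, Y \<omega>))) G"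
    by (subst integrable_distr_eq) auto
  have jd: "distr M (borel \<Otimes>\<^sub>M borel) (\<lambda>\<omega>. (X \<omega>, Y \<omega>)) = density (PX \<Otimes>\<^sub>M lborel) (\<lambda>z. f (fst z) (snd z))"
    using joint_eq by (simp add: case_prod_beta')
  have i2: "integrable (PX \<Otimes>\<^sub>M lborel) (\<lambda>z. f (fst z) (snd z) *\<^sub>R G z)"
    using i1 unfolding jd by (subst (asm) integrable_density) (use Gm2 fm f_nn in auto)
  have i3: "integrable (PX \<Otimes>\<^sub>M lborel) (\<lambda>(x, y). f x y * g x y)"
    using i2 by (simp add: G_def case_prod_beta')
  have "(LINT \<omega>|M. g (X \<omega>) (Y \<omega>)) = (LINT \<omega>|M. G (X \<omega>, Y \<omega>))" by (simp add: G_def)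
  also have "\<dots> = integral\<^sup>L (distr M (borel \<Otimes>\<^sub>M borel) (\<lambda>\<omega>. (X \<omega>, Y \<omega>))) G"
    by (rule integral_distr[symmetric]) auto
  also have "\<dots> = integral\<^sup>L (PX \<Otimes>\<^sub>M lborel) (\<lambda>z. f (fst z) (snd z) *\<^sub>R G z)"
    unfolding jd by (rule integral_density) (use Gm2 fm f_nn in auto)
  also have "\<dots> = integral\<^sup>L (PX \<Otimes>\<^sub>M lborel) (\<lambda>(x, y). f x y * g x y)"
    by (simp add: G_def case_prod_beta')
  also have "\<dots> = (LINT x|PX. LINT y|lborel. f x y * g x y)"
    by (rule P.integral_fst[OF i3, symmetric])
  finally show "(LINT \<omega>|M. g (X \<omega>) (Y \<omega>)) = (LINT x|PX. LINT y|lborel. f x y * g x y)" .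
  show "AE x in PX. integrable lborel (\<lambda>y. f x y * g x y)"
    by (rule P.AE_integrable_fst[OF i3])
  show "integrable PX (\<lambda>x. LINT y|lborel. f x y * g x y)"
    by (rule P.integrable_fst[OF i3])
qed

lemma f_x_meas[measurable]: "f x \<in> borel_measurable borel"
  using measurable_Pair2[OF f_meas, of x] by simp

lemma f_one: "AE x in PX. integrable lborel (f x) \<and> integral\<^sup>L lborel (f x) = 1"
proof -
  interpret P: prob_space PX by (rule PX_prob)
  define c where "c x = (\<integral>\<^sup>+y. ennreal (f x y) \<partial>lborel)" for x
  have fm: "(\<lambda>(x, y). ennreal (f x y)) \<in> borel_measurable (PX \<Otimes>\<^sub>M lborel)"
    using measurable_cong_sets[OF sets_PXl refl] by simp
  have cm: "c \<in> borel_measurable PX"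
    unfolding c_def using lborel.borel_measurable_nn_integral[of "\<lambda>x y. ennreal (f x y)" PX] fm by simp
  have "density PX c = PX"
  proof (rule measure_eqI)
    show "sets (density PX c) = sets PX" by simp
    fix A assume "A \<in> sets (density PX c)"
    then have A[measurable]: "A \<in> sets borel" by simp
    have "emeasure (density PX c) A = (\<integral>\<^sup>+x. c x * indicator A x \<partial>PX)"
      by (rule emeasure_density[OF cm]) simp
    also have "\<dots> = (\<integral>\<^sup>+x. \<integral>\<^sup>+y. ennreal (f x y) * indicator A x \<partial>lborel \<partial>PX)"
      unfolding c_def by (intro nn_integral_cong nn_integral_multc[symmetric]) simp
    also have "\<dots> = (\<integral>\<^sup>+\<omega>. indicator A (X \<omega>) \<partial>M)"
      using joint_nn[of "\<lambda>z. indicator A (fst z)"] by simp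
    also have "\<dots> = (\<integral>\<^sup>+x. indicator A x \<partial>PX)"
      unfolding PX_def by (rule nn_integral_distr[symmetric]) auto
    also have "\<dots> = emeasure PX A" by simp
    finally show "emeasure (density PX c) A = emeasure PX A" .
  qed
  also have "PX = density PX (\<lambda>_. 1)" by (simp add: density_1)
  finally have "AE x in PX. c x = 1"
    using P.density_unique_iff[OF cm] by simp
  then show ?thesis
  proof (rule AE_mp, intro AE_I2 impI)
    fix x assume cx: "c x = 1"
    have i: "integrable lborel (f x)"
      by (rule integrableI_nonneg) (use cx f_nn in \<open>auto simp: c_def\<close>)
    have "ennreal (integral\<^sup>L lborel (f x)) = c x"
      unfolding c_def by (rule nn_integral_eq_integral[OF i, symmetric]) (simp add: f_nn)
    moreover have "0 \<le> integral\<^sup>L lborel (f x)" by (rule integral_nonneg_AE) (simp add: f_nn)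
    ultimately have "integral\<^sup>L lborel (f x) = 1" using cx
      by (metis ennreal_1 ennreal_inj zero_le_one)
    with i show "integrable lborel (f x) \<and> integral\<^sup>L lborel (f x) = 1" by simp
  qed
qed

lemma sets_bl: "sets (borel \<Otimes>\<^sub>M lborel) = sets (borel \<Otimes>\<^sub>M (borel::real measure))"
  by (rule sets_pair_measure_cong) auto

lemma inner_int_meas:
  fixes g :: "real^'k \<Rightarrow> real \<Rightarrow> real"
  assumes g: "(\<lambda>(x, y). g x y) \<in> borel_measurable (borel \<Otimes>\<^sub>M borel)"
  shows "(\<lambda>x. LINT y|lborel. g x y) \<in> borel_measurable borel"
proof (rule lborel.borel_measurable_lebesgue_integral)
  show "(\<lambda>(x, y). g x y) \<in> borel_measurable (borel \<Otimes>\<^sub>M lborel)"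
    using g by (simp add: measurable_cong_sets[OF sets_bl refl])
qed

lemma Fx_meas:
  assumes [measurable]: "t \<in> borel_measurable borel"
  shows "(\<lambda>x. cond_cdf f x (t x)) \<in> borel_measurable borel"
proof -
  have "(\<lambda>x. LINT y|lborel. (if y \<le> t x then 1 else 0) * f x y) \<in> borel_measurable borel"
    by (rule inner_int_meas) measurable
  moreover have "cond_cdf f x (t x) = (LINT y|lborel. (if y \<le> t x then 1 else 0) * f x y)" for x
    unfolding cond_cdf_def set_lebesgue_integral_def
    by (rule Bochner_Integration.integral_cong) (auto simp: indicator_def)
  ultimately show ?thesis by simp
qed

lemma Hx_meas:
  assumes [measurable]: "t \<in> borel_measurable borel"
  shows "(\<lambda>x. LINT y|lborel. f x y * ((t x - y) * indicator {..t x} y)) \<in> borel_measurable borel"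
proof -
  have "(\<lambda>x. LINT y|lborel. f x y * ((t x - y) * (if y \<le> t x then 1 else 0))) \<in> borel_measurable borel"
    by (rule inner_int_meas) measurable
  moreover have "(LINT y|lborel. f x y * ((t x - y) * indicator {..t x} y)) = (LINT y|lborel. f x y * ((t x - y) * (if y \<le> t x then 1 else 0)))" for x
    by (rule Bochner_Integration.integral_cong) (auto simp: indicator_def)
  ultimately show ?thesis by simp
qed

end

lemma maxnorm_ge: "\<bar>v $ i\<bar> \<le> maxnorm v"
  unfolding maxnorm_def by (rule Max_ge) auto

lemma maxnorm_nonneg: "0 \<le> maxnorm v"
  using maxnorm_ge[of v undefined] by linarith

lemma maxnorm_le_norm: "maxnorm v \<le> norm v"
  unfolding maxnorm_def by (rule Max.boundedI) (auto simp: component_le_norm_cart)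

lemma norm_le_maxnorm: "norm (v :: real^'k) \<le> real CARD('k) * maxnorm v"
proof -
  have "norm v \<le> (\<Sum>i\<in>UNIV. \<bar>v $ i\<bar>)" by (rule norm_le_l1_cart)
  also have "\<dots> \<le> (\<Sum>i\<in>(UNIV::'k set). maxnorm v)" by (intro sum_mono maxnorm_ge)
  finally show ?thesis by simp
qed

lemma maxnorm_meas[measurable]: "maxnorm \<in> borel_measurable borel"
proof -
  have "(\<lambda>v::real^'k. Max ((\<lambda>i. \<bar>v $ i\<bar>) ` UNIV)) \<in> borel_measurable borel"
    by measurable
  then show ?thesis unfolding maxnorm_def[abs_def] by simp
qed

lemma maxnorm_le_iff: "maxnorm v \<le> c \<longleftrightarrow> (\<forall>i. \<bar>v $ i\<bar> \<le> c)"
  unfolding maxnorm_def by (subst Max_le_iff) auto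

lemma maxnorm_zero_iff: "maxnorm v = 0 \<longleftrightarrow> v = 0"
proof
  assume "maxnorm v = 0"
  then have "\<forall>i. \<bar>v $ i\<bar> \<le> 0" using maxnorm_le_iff[of v 0] by simp
  then show "v = 0" by (simp add: vec_eq_iff)
next
  assume "v = 0" then show "maxnorm v = 0"
    using maxnorm_le_iff[of v 0] maxnorm_nonneg[of v] by simp
qed

lemma maxnorm_triangle: "maxnorm (a + b) \<le> maxnorm a + maxnorm b"
  unfolding maxnorm_le_iff[of "a+b"]
  using maxnorm_ge[of a] maxnorm_ge[of b] abs_triangle_ineq by (metis add_mono order_trans vector_add_component)

lemma maxnorm_scale: "maxnorm (c *\<^sub>R v) = \<bar>c\<bar> * maxnorm v"
proof (rule antisym)
  show "maxnorm (c *\<^sub>R v) \<le> \<bar>c\<bar> * maxnorm v"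
    unfolding maxnorm_le_iff using maxnorm_ge[of v]
    by (auto simp: abs_mult intro: mult_left_mono)
  show "\<bar>c\<bar> * maxnorm v \<le> maxnorm (c *\<^sub>R v)"
  proof (cases "c = 0")
    case True then show ?thesis by (simp add: maxnorm_nonneg)
  next
    case False
    have "maxnorm v \<le> maxnorm (c *\<^sub>R v) / \<bar>c\<bar>"
      unfolding maxnorm_le_iff using maxnorm_ge[of "c *\<^sub>R v"] False
      by (auto simp: abs_mult field_simps)
    then show ?thesis using False by (simp add: field_simps)
  qed
qed

lemma inner_maxnorm: "\<bar>u \<bullet> (w::real^'k)\<bar> \<le> real CARD('k) * (maxnorm u * maxnorm w)"
proof -
  have "\<bar>u \<bullet> w\<bar> = \<bar>\<Sum>i\<in>UNIV. u $ i * w $ i\<bar>" by (simp add: inner_vec_def)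
  also have "\<dots> \<le> (\<Sum>i\<in>UNIV. \<bar>u $ i * w $ i\<bar>)" by (rule sum_abs)
  also have "\<dots> \<le> (\<Sum>i\<in>(UNIV::'k set). maxnorm u * maxnorm w)"
    by (intro sum_mono) (auto simp: abs_mult intro!: mult_mono maxnorm_ge maxnorm_nonneg)
  finally show ?thesis by simp
qed

lemma maxnorm2_fst: "maxnorm (fst p) \<le> maxnorm2 p" and maxnorm2_snd: "maxnorm (snd p) \<le> maxnorm2 p"
  by (auto simp: maxnorm2_def)

lemma maxnorm2_nonneg: "0 \<le> maxnorm2 p"
  using maxnorm2_fst[of p] maxnorm_nonneg[of "fst p"] by linarith

lemma cont_bound:
  fixes G :: "real \<Rightarrow> real"
  assumes "continuous_on UNIV G"
  shows "\<exists>B\<ge>0. \<forall>z. \<bar>z\<bar> \<le> R \<longrightarrow> \<bar>G z\<bar> \<le> B"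
proof -
  have "compact (G ` {-R..R})"
    by (rule compact_continuous_image) (use assms continuous_on_subset in auto)
  then obtain B where B: "\<forall>y\<in>G ` {-R..R}. norm y \<le> B" using compact_imp_bounded bounded_iff by metis
  show ?thesis
  proof (intro exI conjI allI impI)
    show "0 \<le> max B 0" by simp
    fix z :: real assume "\<bar>z\<bar> \<le> R"
    then have "z \<in> {-R..R}" by auto
    then have "\<bar>G z\<bar> \<le> B" using B by auto
    then show "\<bar>G z\<bar> \<le> max B 0" by simp
  qed
qed

lemma inner_sel_bound:
  fixes x :: "real^'k"
  assumes "maxnorm w \<le> R0"
  shows "\<bar>x \<bullet> w\<bar> \<le> real CARD('k) * maxnorm x * R0"
proof -
  have "\<bar>x \<bullet> w\<bar> \<le> real CARD('k) * (maxnorm x * maxnorm w)" by (rule inner_maxnorm)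
  also have "\<dots> \<le> real CARD('k) * (maxnorm x * R0)"
    using assms by (intro mult_left_mono maxnorm_nonneg) (auto simp: maxnorm_nonneg)
  finally show ?thesis by (simp add: mult.assoc)
qed

lemma sup_ge:
  fixes U :: "'t set" and sel :: "'t \<Rightarrow> real^'k" and Gc :: "real \<Rightarrow> real"
  assumes cont: "continuous_on UNIV Gc" and R: "\<forall>\<tau>\<in>U. maxnorm (sel \<tau>) \<le> R0" and t0: "\<tau>0 \<in> U"
  shows "Gc (x \<bullet> sel \<tau>0) \<le> (SUP \<tau>\<in>U. Gc (x \<bullet> sel \<tau>))"
proof (rule cSUP_upper[OF t0])
  obtain B where B: "\<forall>z. \<bar>z\<bar> \<le> real CARD('k) * maxnorm x * R0 \<longrightarrow> \<bar>Gc z\<bar> \<le> B"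
    using cont_bound[OF cont] by blast
  show "bdd_above ((\<lambda>\<tau>. Gc (x \<bullet> sel \<tau>)) ` U)"
  proof (rule bdd_aboveI2)
    fix \<tau> assume "\<tau> \<in> U"
    then have "\<bar>x \<bullet> sel \<tau>\<bar> \<le> real CARD('k) * maxnorm x * R0" using R inner_sel_bound by blast
    then show "Gc (x \<bullet> sel \<tau>) \<le> B" using B by fastforce
  qed
qed

lemma sup_small:
  fixes U :: "'t set" and sel :: "'t \<Rightarrow> real^'k" and Gc :: "real \<Rightarrow> real"
  assumes cont: "continuous_on UNIV Gc" and R: "\<forall>\<tau>\<in>U. maxnorm (sel \<tau>) \<le> R0" and ne: "U \<noteq> {}"
  shows "\<exists>B\<ge>0. \<forall>x::real^'k. maxnorm x \<le> 1 \<longrightarrow> (\<forall>\<tau>\<in>U. \<bar>Gc (x \<bullet> sel \<tau>)\<bar> \<le> B) \<and> (SUP \<tau>\<in>U. Gc (x \<bullet> sel \<tau>)) \<le> B"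
proof -
  obtain B where B: "B \<ge> 0" "\<forall>z. \<bar>z\<bar> \<le> real CARD('k) * R0 \<longrightarrow> \<bar>Gc z\<bar> \<le> B"
    using cont_bound[OF cont] by blast
  have R0: "0 \<le> R0" using ne R maxnorm_nonneg by (metis all_not_in_conv order_trans)
  have b: "\<bar>Gc (x \<bullet> sel \<tau>)\<bar> \<le> B" if "maxnorm x \<le> 1" "\<tau> \<in> U" for x :: "real^'k" and \<tau>
  proof -
    have "\<bar>x \<bullet> sel \<tau>\<bar> \<le> real CARD('k) * maxnorm x * R0" using R that inner_sel_bound by blast
    also have "\<dots> \<le> real CARD('k) * 1 * R0" using that R0 by (intro mult_right_mono mult_left_mono) auto
    finally show ?thesis using B by auto
  qed
  show ?thesis
  proof (intro exI conjI allI impI ballI)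
    show "0 \<le> B" by fact
    fix x :: "real^'k" assume x: "maxnorm x \<le> 1"
    show "\<And>\<tau>. \<tau> \<in> U \<Longrightarrow> \<bar>Gc (x \<bullet> sel \<tau>)\<bar> \<le> B" using b x by blast
    show "(SUP \<tau>\<in>U. Gc (x \<bullet> sel \<tau>)) \<le> B"
      by (rule cSUP_least[OF ne]) (use b[OF x] in \<open>auto simp: abs_le_iff\<close>)
  qed
qed

lemma t_le_sq: "(t::real) \<le> 1 + t\<^sup>2"
proof -
  have "0 \<le> (t - 1/2)\<^sup>2" by simp
  then have "0 \<le> t*t - t + 1/4" by (simp add: power2_eq_square algebra_simps)
  then show ?thesis by (simp add: power2_eq_square)
qed

lemma pw1:
  fixes m g B :: real
  assumes "0 \<le> g" "0 \<le> m" "m \<le> 1 \<Longrightarrow> g \<le> B" "0 \<le> B"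
  shows "m * g \<le> 1 + B + m ^ 3 * g\<^sup>2"
proof (cases "m \<le> 1")
  case True
  then have "m * g \<le> 1 * g" using assms by (intro mult_right_mono) auto
  moreover have "0 \<le> m ^ 3 * g\<^sup>2" using assms by simp
  ultimately show ?thesis using assms True by linarith
next
  case False
  have "m * g \<le> 1 + (m * g)\<^sup>2" by (rule t_le_sq)
  also have "(m * g)\<^sup>2 = m^2 * g\<^sup>2" by (simp add: power_mult_distrib)
  also have "\<dots> \<le> m^3 * g\<^sup>2" using False by (intro mult_right_mono power_increasing) auto
  finally have "m * g \<le> 1 + m ^ 3 * g\<^sup>2" by simp
  moreover have "0 \<le> B" using assms(4) .
  ultimately show ?thesis by linarith
qed

lemma pw2:
  fixes m g B :: real
  assumes "0 \<le> g" "0 \<le> m" "m \<le> 1 \<Longrightarrow> g \<le> B" "0 \<le> B"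
  shows "m^2 * g \<le> 1 + B + m ^ 5 * g\<^sup>2"
proof (cases "m \<le> 1")
  case True
  then have "m^2 \<le> 1" using assms by (simp add: power_le_one)
  then have "m^2 * g \<le> 1 * g" using assms by (intro mult_right_mono) auto
  moreover have "0 \<le> m ^ 5 * g\<^sup>2" using assms by simp
  ultimately show ?thesis using assms True by linarith
next
  case False
  have "m^2 * g \<le> 1 + (m^2 * g)\<^sup>2" by (rule t_le_sq)
  also have "(m^2 * g)\<^sup>2 = m^4 * g\<^sup>2" by (simp add: power_mult_distrib power_mult[symmetric])
  also have "\<dots> \<le> m^5 * g\<^sup>2" using False by (intro mult_right_mono power_increasing) auto
  finally have "m^2 * g \<le> 1 + m ^ 5 * g\<^sup>2" by simp
  moreover have "0 \<le> B" using assms(4) .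
  ultimately show ?thesis by linarith
qed

lemma cont_meas: "continuous_on UNIV (G::real \<Rightarrow> real) \<Longrightarrow> G \<in> borel_measurable borel"
  by (rule borel_measurable_continuous_onI)

lemma pw_sup1:
  fixes U :: "'t set" and sel :: "'t \<Rightarrow> real^'k" and Gc :: "real \<Rightarrow> real"
  assumes cont: "continuous_on UNIV Gc" and nn: "\<And>z. 0 \<le> Gc z"
    and R: "\<forall>\<tau>\<in>U. maxnorm (sel \<tau>) \<le> R0" and ne: "U \<noteq> {}"
  shows "\<exists>B\<ge>0. \<forall>(x::real^'k) \<tau>. \<tau> \<in> U \<longrightarrow> maxnorm x * Gc (x \<bullet> sel \<tau>) \<le> 1 + B + maxnorm x ^ 3 * (SUP \<tau>\<in>U. (Gc (x \<bullet> sel \<tau>))\<^sup>2)"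
proof -
  obtain B where B: "B \<ge> 0" "\<And>x::real^'k. maxnorm x \<le> 1 \<Longrightarrow> (\<forall>\<tau>\<in>U. \<bar>Gc (x \<bullet> sel \<tau>)\<bar> \<le> B)"
    using sup_small[OF cont R ne] by blast
  have c2: "continuous_on UNIV (\<lambda>z. (Gc z)\<^sup>2)" using cont by (intro continuous_intros)
  show ?thesis
  proof (intro exI conjI allI impI)
    show "0 \<le> B" by fact
    fix x :: "real^'k" and \<tau> assume t: "\<tau> \<in> U"
    have "maxnorm x * Gc (x \<bullet> sel \<tau>) \<le> 1 + B + maxnorm x ^ 3 * (Gc (x \<bullet> sel \<tau>))\<^sup>2"
      by (rule pw1) (use nn maxnorm_nonneg B t in auto)
    also have "\<dots> \<le> 1 + B + maxnorm x ^ 3 * (SUP \<tau>\<in>U. (Gc (x \<bullet> sel \<tau>))\<^sup>2)"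
      using sup_ge[OF c2 R t, of x] by (intro add_left_mono mult_left_mono) (auto simp: maxnorm_nonneg)
    finally show "maxnorm x * Gc (x \<bullet> sel \<tau>) \<le> 1 + B + maxnorm x ^ 3 * (SUP \<tau>\<in>U. (Gc (x \<bullet> sel \<tau>))\<^sup>2)" .
  qed
qed

lemma pw_sup2:
  fixes U :: "'t set" and sel :: "'t \<Rightarrow> real^'k" and Gc :: "real \<Rightarrow> real"
  assumes cont: "continuous_on UNIV Gc" and nn: "\<And>z. 0 \<le> Gc z"
    and R: "\<forall>\<tau>\<in>U. maxnorm (sel \<tau>) \<le> R0" and ne: "U \<noteq> {}"
  shows "\<exists>B\<ge>0. \<forall>(x::real^'k) \<tau>. \<tau> \<in> U \<longrightarrow>
     maxnorm x ^ 2 * Gc (x \<bullet> sel \<tau>) \<le> 1 + B + maxnorm x ^ 5 * (SUP \<tau>\<in>U. Gc (x \<bullet> sel \<tau>))\<^sup>2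
   \<and> maxnorm x ^ 2 * (SUP \<tau>\<in>U. Gc (x \<bullet> sel \<tau>)) \<le> 1 + B + maxnorm x ^ 5 * (SUP \<tau>\<in>U. Gc (x \<bullet> sel \<tau>))\<^sup>2"
proof -
  obtain B where B: "B \<ge> 0" "\<And>x::real^'k. maxnorm x \<le> 1 \<Longrightarrow> (\<forall>\<tau>\<in>U. \<bar>Gc (x \<bullet> sel \<tau>)\<bar> \<le> B) \<and> (SUP \<tau>\<in>U. Gc (x \<bullet> sel \<tau>)) \<le> B"
    using sup_small[OF cont R ne] by blast
  show ?thesis
  proof (intro exI conjI allI impI)
    show "0 \<le> B" by fact
    fix x :: "real^'k" and \<tau> assume t: "\<tau> \<in> U"
    have ge: "Gc (x \<bullet> sel \<tau>) \<le> (SUP \<tau>\<in>U. Gc (x \<bullet> sel \<tau>))" by (rule sup_ge[OF cont R t])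
    have g0: "0 \<le> Gc (x \<bullet> sel \<tau>)" by (rule nn)
    have "maxnorm x ^ 2 * Gc (x \<bullet> sel \<tau>) \<le> 1 + B + maxnorm x ^ 5 * (Gc (x \<bullet> sel \<tau>))\<^sup>2"
      by (rule pw2) (use nn maxnorm_nonneg B t in auto)
    also have "\<dots> \<le> 1 + B + maxnorm x ^ 5 * (SUP \<tau>\<in>U. Gc (x \<bullet> sel \<tau>))\<^sup>2"
      using ge g0 by (intro add_left_mono mult_left_mono power_mono) (auto simp: maxnorm_nonneg)
    finally show "maxnorm x ^ 2 * Gc (x \<bullet> sel \<tau>) \<le> 1 + B + maxnorm x ^ 5 * (SUP \<tau>\<in>U. Gc (x \<bullet> sel \<tau>))\<^sup>2" .
    show "maxnorm x ^ 2 * (SUP \<tau>\<in>U. Gc (x \<bullet> sel \<tau>)) \<le> 1 + B + maxnorm x ^ 5 * (SUP \<tau>\<in>U. Gc (x \<bullet> sel \<tau>))\<^sup>2"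
      by (rule pw2) (use ge g0 maxnorm_nonneg B in auto)
  qed
qed

locale L3 =
  fixes M :: "'a measure"
    and X :: "'a \<Rightarrow> real^'k" and Y :: "'a \<Rightarrow> real"
    and f :: "real^'k \<Rightarrow> real \<Rightarrow> real"
    and \<alpha> :: real
    and Th :: "((real^'k) \<times> (real^'k)) set" and th0 :: "(real^'k) \<times> (real^'k)"
    and G1 G1d G1dd cG2 G2 G2d G2dd a_fn :: "real \<Rightarrow> real"
    and d0 :: real
  assumes alpha: "0 < \<alpha>" "\<alpha> < 1"
    and prob: "prob_space M" and complete: "complete_measure M"
    and rvX: "X \<in> borel_measurable M" and rvY: "Y \<in> borel_measurable M"
    \<comment> \<open>parameter space and model (M)\<close>
    and Th: "compact Th" "interior Th \<noteq> {}" "th0 \<in> Th"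
    and dens: "is_cond_density M X Y f"
    and model: "AE x in distr M borel X.
                  quantile (cond_cdf f x) \<alpha> = x \<bullet> fst th0 \<and>
                  expected_shortfall (cond_cdf f x) \<alpha> = x \<bullet> snd th0"
    \<comment> \<open>(A-1)\<close>
    and second_mom: "AE x in distr M borel X. integrable lborel (\<lambda>y. y\<^sup>2 * f x y)"
    and dens_loc: "AE x in distr M borel X. \<exists>\<epsilon>>0.
                  (\<forall>y\<in>ball (x \<bullet> fst th0) \<epsilon>. 0 < f x y) \<and>
                  continuous_on (ball (x \<bullet> fst th0) \<epsilon>) (f x) \<and>
                  bounded (f x ` ball (x \<bullet> fst th0) \<epsilon>)"
    \<comment> \<open>(A-2)\<close>
    and XX_int: "\<forall>i j. integrable M (\<lambda>\<omega>. X \<omega> $ i * X \<omega> $ j)"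
    and XX_pd: "pos_def (\<chi> i j. LINT \<omega>|M. X \<omega> $ i * X \<omega> $ j)"
    \<comment> \<open>(A-3)\<close>
    and G1_d1: "\<forall>z. (G1 has_real_derivative G1d z) (at z)"
    and G1_d2: "\<forall>z. (G1d has_real_derivative G1dd z) (at z)"
    and G1_cont: "continuous_on UNIV G1dd"
    and G1_mono: "mono G1"
    and G1_int: "integrable M (\<lambda>\<omega>. G1 (Y \<omega>))"
    and G2_d1: "\<forall>z. (cG2 has_real_derivative G2 z) (at z)"
    and G2_d2: "\<forall>z. (G2 has_real_derivative G2d z) (at z)"
    and G2_d3: "\<forall>z. (G2d has_real_derivative G2dd z) (at z)"
    and G2_cont: "continuous_on UNIV G2dd"
    and G2_pos: "\<forall>z. 0 < G2 z" and G2d_pos: "\<forall>z. 0 < G2d z"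
    and a_int: "integrable M (\<lambda>\<omega>. a_fn (Y \<omega>))"
    and d0: "0 < d0"
    and m1: "integrable M (\<lambda>\<omega>. maxnorm (X \<omega>) ^ 3
              * (SUP \<tau>\<in>Ubar Th d0 th0. G1d (X \<omega> \<bullet> fst \<tau>))
              * (SUP \<tau>\<in>Ubar Th d0 th0. G1dd (X \<omega> \<bullet> fst \<tau>)))"
    and m2: "integrable M (\<lambda>\<omega>. maxnorm (X \<omega>) ^ 3
              * (SUP \<tau>\<in>Ubar Th d0 th0. G1d (X \<omega> \<bullet> fst \<tau>))
              * (SUP \<tau>\<in>Ubar Th d0 th0. G2d (X \<omega> \<bullet> snd \<tau>)))"
    and m3: "integrable M (\<lambda>\<omega>. maxnorm (X \<omega>) ^ 3
              * (SUP \<tau>\<in>Ubar Th d0 th0. G2 (X \<omega> \<bullet> snd \<tau>))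
              * (SUP \<tau>\<in>Ubar Th d0 th0. G1dd (X \<omega> \<bullet> fst \<tau>)))"
    and m4: "integrable M (\<lambda>\<omega>. maxnorm (X \<omega>) ^ 3
              * (SUP \<tau>\<in>Ubar Th d0 th0. G2 (X \<omega> \<bullet> snd \<tau>))
              * (SUP \<tau>\<in>Ubar Th d0 th0. G2d (X \<omega> \<bullet> snd \<tau>)))"
    and m5: "integrable M (\<lambda>\<omega>. maxnorm (X \<omega>) ^ 3
              * (SUP \<tau>\<in>Ubar Th d0 th0. (G1d (X \<omega> \<bullet> fst \<tau>))\<^sup>2))"
    and m6: "integrable M (\<lambda>\<omega>. maxnorm (X \<omega>) ^ 3
              * (SUP \<tau>\<in>Ubar Th d0 th0. (G2 (X \<omega> \<bullet> snd \<tau>))\<^sup>2))"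
    and m7: "integrable M (\<lambda>\<omega>. maxnorm (X \<omega>) ^ 3
              * (SUP \<tau>\<in>Ubar Th d0 th0. G1d (X \<omega> \<bullet> fst \<tau>) * G2 (X \<omega> \<bullet> snd \<tau>)))"
    and m8: "integrable M (\<lambda>\<omega>. maxnorm (X \<omega>) ^ 5
              * (SUP \<tau>\<in>Ubar Th d0 th0. G2d (X \<omega> \<bullet> snd \<tau>))
              * (SUP \<tau>\<in>Ubar Th d0 th0. G2dd (X \<omega> \<bullet> snd \<tau>)))"
    and m9: "integrable M (\<lambda>\<omega>. maxnorm (X \<omega>) ^ 5
              * (SUP \<tau>\<in>Ubar Th d0 th0. G2d (X \<omega> \<bullet> snd \<tau>))\<^sup>2)"
    and m10: "integrable M (\<lambda>\<omega>. maxnorm (X \<omega>) ^ 4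
              * (SUP \<tau>\<in>Ubar Th d0 th0. G2d (X \<omega> \<bullet> snd \<tau>))
              * (SUP \<tau>\<in>Ubar Th d0 th0. G2dd (X \<omega> \<bullet> snd \<tau>))
              * (LINT y|lborel. \<bar>y\<bar> * f (X \<omega>) y))"
    and m11: "\<forall>th\<in>Ubar Th d0 th0. integrable M (\<lambda>\<omega>. maxnorm (X \<omega>) ^ 3
              * G2d (X \<omega> \<bullet> snd th)
              * (SUP \<tau>\<in>Ubar Th d0 th0. G2d (X \<omega> \<bullet> snd \<tau>))
              * (LINT y|lborel. \<bar>y\<bar> * f (X \<omega>) y))"
    and m12: "\<forall>th\<in>Ubar Th d0 th0. integrable M (\<lambda>\<omega>. maxnorm (X \<omega>) ^ 3
              * G2d (X \<omega> \<bullet> snd th)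
              * (SUP \<tau>\<in>Ubar Th d0 th0. G2dd (X \<omega> \<bullet> snd \<tau>))
              * (LINT y|lborel. y\<^sup>2 * f (X \<omega>) y))"
    and m13: "integrable M (\<lambda>\<omega>. maxnorm (X \<omega>) ^ 3
              * (SUP \<tau>\<in>Ubar Th d0 th0. G2d (X \<omega> \<bullet> snd \<tau>))
              * (SUP \<tau>\<in>Ubar Th d0 th0. G2dd (X \<omega> \<bullet> snd \<tau>))
              * (LINT y|lborel. y\<^sup>2 * f (X \<omega>) y))"
begin

lemma G_deriv_cont: "(\<forall>z. (g has_real_derivative g' z) (at z)) \<Longrightarrow> continuous_on UNIV g"
  by (intro continuous_at_imp_continuous_on ballI DERIV_isCont) auto

lemma cG1d: "continuous_on UNIV G1d" using G1_d2 by (rule G_deriv_cont)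
lemma cG2: "continuous_on UNIV G2" using G2_d2 by (rule G_deriv_cont)
lemma cG2d: "continuous_on UNIV G2d" using G2_d3 by (rule G_deriv_cont)

lemma mG1d[measurable]: "G1d \<in> borel_measurable borel" by (rule cont_meas[OF cG1d])
lemma mG2[measurable]: "G2 \<in> borel_measurable borel" by (rule cont_meas[OF cG2])
lemma mG2d[measurable]: "G2d \<in> borel_measurable borel" by (rule cont_meas[OF cG2d])

lemma G1d_nn: "0 \<le> G1d z"
proof -
  have "((\<lambda>h. (G1 (z + h) - G1 z) / h) \<longlongrightarrow> G1d z) (at 0)"
    using G1_d1 by (simp add: DERIV_def)
  then have "((\<lambda>h. (G1 (z + h) - G1 z) / h) \<longlongrightarrow> G1d z) (at_right 0)"
    by (rule filterlim_mono) (auto simp: at_within_le_at)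
  moreover have "eventually (\<lambda>h. 0 \<le> (G1 (z + h) - G1 z) / h) (at_right 0)"
    using G1_mono by (intro eventually_at_rightI[of 0 1]) (auto simp: mono_def)
  ultimately show ?thesis by (rule tendsto_lowerbound) simp
qed

sublocale J: joint M X Y f
  by (intro joint.intro prob rvX rvY dens)

interpretation P: prob_space M by (rule prob)

abbreviation "U \<equiv> Ubar Th d0 th0"


lemma U_ne: "th0 \<in> U"
proof -
  have "maxnorm (0::real^'k) = 0" by (simp add: maxnorm_zero_iff)
  then show ?thesis using Th(3) d0 by (simp add: Ubar_def maxnorm2_def)
qed

lemma U_sub: "\<theta> \<in> U \<Longrightarrow> \<theta> \<in> Th \<and> maxnorm2 (\<theta> - th0) \<le> d0"
  by (simp add: Ubar_def)

definition "R0 = maxnorm2 th0 + d0"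

lemma R0_nn: "0 \<le> R0" using d0 maxnorm2_nonneg[of th0] by (simp add: R0_def)

lemma U_fst: "\<forall>\<tau>\<in>U. maxnorm (fst \<tau>) \<le> R0" and U_snd: "\<forall>\<tau>\<in>U. maxnorm (snd \<tau>) \<le> R0"
proof -
  have a: "maxnorm (fst \<tau>) \<le> R0 \<and> maxnorm (snd \<tau>) \<le> R0" if "\<tau> \<in> U" for \<tau>
  proof -
    have d: "maxnorm2 (\<tau> - th0) \<le> d0" using U_sub[OF that] by simp
    have "maxnorm (fst \<tau>) = maxnorm (fst th0 + fst (\<tau> - th0))" by simp
    also have "\<dots> \<le> maxnorm (fst th0) + maxnorm (fst (\<tau> - th0))" by (rule maxnorm_triangle)
    also have "\<dots> \<le> R0" unfolding R0_def using maxnorm2_fst[of th0] maxnorm2_fst[of "\<tau> - th0"] d by linarith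
    finally have 1: "maxnorm (fst \<tau>) \<le> R0" .
    have "maxnorm (snd \<tau>) = maxnorm (snd th0 + snd (\<tau> - th0))" by simp
    also have "\<dots> \<le> maxnorm (snd th0) + maxnorm (snd (\<tau> - th0))" by (rule maxnorm_triangle)
    also have "\<dots> \<le> R0" unfolding R0_def using maxnorm2_snd[of th0] maxnorm2_snd[of "\<tau> - th0"] d by linarith
    finally show ?thesis using 1 by simp
  qed
  show "\<forall>\<tau>\<in>U. maxnorm (fst \<tau>) \<le> R0" "\<forall>\<tau>\<in>U. maxnorm (snd \<tau>) \<le> R0" using a by auto
qed

definition "good x \<longleftrightarrow> dens2 (f x) \<and> quantile (cond_cdf f x) \<alpha> = x \<bullet> fst th0 \<and>
   expected_shortfall (cond_cdf f x) \<alpha> = x \<bullet> snd th0 \<and>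
   (\<exists>\<epsilon>>0. (\<forall>y\<in>ball (x \<bullet> fst th0) \<epsilon>. 0 < f x y) \<and>
                  continuous_on (ball (x \<bullet> fst th0) \<epsilon>) (f x) \<and>
                  bounded (f x ` ball (x \<bullet> fst th0) \<epsilon>))"

lemma AE_good: "AE x in J.PX. good x"
proof -
  have "AE x in J.PX. integrable lborel (f x) \<and> integral\<^sup>L lborel (f x) = 1" by (rule J.f_one)
  moreover have "AE x in J.PX. integrable lborel (\<lambda>y. y\<^sup>2 * f x y)" unfolding J.PX_def by (rule second_mom)
  moreover have "AE x in J.PX. quantile (cond_cdf f x) \<alpha> = x \<bullet> fst th0 \<and>
                  expected_shortfall (cond_cdf f x) \<alpha> = x \<bullet> snd th0" unfolding J.PX_def by (rule model)
  moreover have "AE x in J.PX. \<exists>\<epsilon>>0.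
                  (\<forall>y\<in>ball (x \<bullet> fst th0) \<epsilon>. 0 < f x y) \<and>
                  continuous_on (ball (x \<bullet> fst th0) \<epsilon>) (f x) \<and>
                  bounded (f x ` ball (x \<bullet> fst th0) \<epsilon>)" unfolding J.PX_def by (rule dens_loc)
  ultimately show ?thesis
  proof eventually_elim
    case (elim x)
    have ym: "integrable lborel (\<lambda>y. y * f x y)"
    proof (rule Bochner_Integration.integrable_bound)
      show "integrable lborel (\<lambda>y. f x y + y\<^sup>2 * f x y)" using elim by auto
      show "(\<lambda>y. y * f x y) \<in> borel_measurable lborel" by simp
      show "AE y in lborel. norm (y * f x y) \<le> norm (f x y + y\<^sup>2 * f x y)"
      proof (intro AE_I2)
        fix y :: real
        have "\<bar>y\<bar> \<le> 1 + y\<^sup>2" using t_le_sq[of "\<bar>y\<bar>"] by simp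
        then have "\<bar>y\<bar> * f x y \<le> (1 + y\<^sup>2) * f x y" by (intro mult_right_mono J.f_nn)
        then show "norm (y * f x y) \<le> norm (f x y + y\<^sup>2 * f x y)"
          using J.f_nn[of x y] by (simp add: abs_mult algebra_simps)
      qed
    qed
    have "dens2 (f x)"
      by (unfold_locales) (use elim ym J.f_nn in auto)
    then show ?case using elim by (simp add: good_def)
  qed
qed

lemma good_F: "good x \<Longrightarrow> dens1.F (f x) = cond_cdf f x"
  by (auto simp: fun_eq_iff dens1.F_def cond_cdf_def good_def dens2_def)

lemma psi1_int:
  assumes th: "\<theta> \<in> U"
  shows "integrable M (\<lambda>\<omega>. psi1 \<alpha> G1d G2 (Y \<omega>) (X \<omega>) \<theta>)"
proof -
  obtain B1 where B1: "B1 \<ge> 0" "\<And>(x::real^'k) \<tau>. \<tau> \<in> U \<Longrightarrow> maxnorm x * G1d (x \<bullet> fst \<tau>) \<le> 1 + B1 + maxnorm x ^ 3 * (SUP \<tau>\<in>U. (G1d (x \<bullet> fst \<tau>))\<^sup>2)"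
    using pw_sup1[OF cG1d G1d_nn U_fst] U_ne by blast
  obtain B2 where B2: "B2 \<ge> 0" "\<And>(x::real^'k) \<tau>. \<tau> \<in> U \<Longrightarrow> maxnorm x * G2 (x \<bullet> snd \<tau>) \<le> 1 + B2 + maxnorm x ^ 3 * (SUP \<tau>\<in>U. (G2 (x \<bullet> snd \<tau>))\<^sup>2)"
    using pw_sup1[OF cG2 less_imp_le[OF G2_pos[rule_format]] U_snd] U_ne by blast
  define h where "h \<omega> = real CARD('k) * ((1 + B1 + maxnorm (X \<omega>) ^ 3 * (SUP \<tau>\<in>U. (G1d (X \<omega> \<bullet> fst \<tau>))\<^sup>2))
      + (1 / \<alpha>) * (1 + B2 + maxnorm (X \<omega>) ^ 3 * (SUP \<tau>\<in>U. (G2 (X \<omega> \<bullet> snd \<tau>))\<^sup>2)))" for \<omega>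
  have hi: "integrable M h"
    unfolding h_def using m5 m6 by (intro integrable_mult_right Bochner_Integration.integrable_add) auto
  show ?thesis
  proof (rule Bochner_Integration.integrable_bound[OF hi])
    show "(\<lambda>\<omega>. psi1 \<alpha> G1d G2 (Y \<omega>) (X \<omega>) \<theta>) \<in> borel_measurable M"
      unfolding psi1_def by measurable
    show "AE \<omega> in M. norm (psi1 \<alpha> G1d G2 (Y \<omega>) (X \<omega>) \<theta>) \<le> norm (h \<omega>)"
    proof (intro AE_I2)
      fix \<omega>
      define x where "x = X \<omega>"
      define c where "c = (1 / \<alpha>) * ((if Y \<omega> \<le> x \<bullet> fst \<theta> then 1 else 0) - \<alpha>) * (\<alpha> * G1d (x \<bullet> fst \<theta>) + G2 (x \<bullet> snd \<theta>))"
      have g1: "0 \<le> G1d (x \<bullet> fst \<theta>)" by (rule G1d_nn)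
      have g2: "0 < G2 (x \<bullet> snd \<theta>)" using G2_pos by auto
      have d1: "\<bar>(if Y \<omega> \<le> x \<bullet> fst \<theta> then 1 else 0) - \<alpha>\<bar> \<le> 1" using alpha by auto
      have gq: "0 \<le> \<alpha> * G1d (x \<bullet> fst \<theta>) + G2 (x \<bullet> snd \<theta>)" using alpha g1 g2 by simp
      have "\<bar>c\<bar> = (1 / \<alpha>) * \<bar>(if Y \<omega> \<le> x \<bullet> fst \<theta> then 1 else 0) - \<alpha>\<bar> * (\<alpha> * G1d (x \<bullet> fst \<theta>) + G2 (x \<bullet> snd \<theta>))"
        unfolding c_def using alpha gq by (simp add: abs_mult)
      also have "\<dots> \<le> (1 / \<alpha>) * 1 * (\<alpha> * G1d (x \<bullet> fst \<theta>) + G2 (x \<bullet> snd \<theta>))"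
        using alpha gq d1 by (intro mult_right_mono mult_left_mono) auto
      finally have "\<bar>c\<bar> \<le> (1 / \<alpha>) * 1 * (\<alpha> * G1d (x \<bullet> fst \<theta>) + G2 (x \<bullet> snd \<theta>))" .
      also have "\<dots> = G1d (x \<bullet> fst \<theta>) + (1 / \<alpha>) * G2 (x \<bullet> snd \<theta>)" using alpha by (simp add: field_simps)
      finally have cb: "\<bar>c\<bar> \<le> G1d (x \<bullet> fst \<theta>) + (1 / \<alpha>) * G2 (x \<bullet> snd \<theta>)" .
      have "norm (psi1 \<alpha> G1d G2 (Y \<omega>) (X \<omega>) \<theta>) = \<bar>c\<bar> * norm x"
        by (simp add: psi1_def c_def x_def)
      also have "\<dots> \<le> (G1d (x \<bullet> fst \<theta>) + (1 / \<alpha>) * G2 (x \<bullet> snd \<theta>)) * (real CARD('k) * maxnorm x)"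
        using cb norm_le_maxnorm[of x] by (intro mult_mono) auto
      also have "\<dots> = real CARD('k) * (maxnorm x * G1d (x \<bullet> fst \<theta>) + (1 / \<alpha>) * (maxnorm x * G2 (x \<bullet> snd \<theta>)))"
        by (simp add: algebra_simps)
      also have "\<dots> \<le> h \<omega>"
        unfolding h_def x_def[symmetric] using B1(2)[OF th, of x] B2(2)[OF th, of x] alpha
        by (intro mult_left_mono add_mono) auto
      also have "\<dots> \<le> norm (h \<omega>)" by simp
      finally show "norm (psi1 \<alpha> G1d G2 (Y \<omega>) (X \<omega>) \<theta>) \<le> norm (h \<omega>)" .
    qed
  qed
qed

definition "Hx x t = (LINT y|lborel. f x y * ((t - y) * indicator {..t} y))"

lemma good_d2: "good x \<Longrightarrow> dens2 (f x)" by (simp add: good_def)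

lemma good_H: "good x \<Longrightarrow> dens2.H (f x) = Hx x"
  by (simp add: fun_eq_iff Hx_def dens2.H_def good_def)

lemma good_facts2:
  assumes g: "good x"
  defines "Q \<equiv> x \<bullet> fst th0" and "E \<equiv> x \<bullet> snd th0"
  shows "cond_cdf f x Q = \<alpha>" "Hx x Q = \<alpha> * Q - \<alpha> * E" "isCont (cond_cdf f x) Q"
    "\<exists>c>0. \<exists>e>0. \<forall>s. \<bar>s\<bar> \<le> e \<longrightarrow> c * s\<^sup>2 \<le> s * (cond_cdf f x (Q + s) - cond_cdf f x Q)"
    "\<And>s. 0 \<le> Hx x (Q + s) - Hx x Q - s * cond_cdf f x Q \<and> Hx x (Q + s) - Hx x Q - s * cond_cdf f x Q \<le> s * (cond_cdf f x (Q + s) - cond_cdf f x Q)"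
    "\<And>t. 0 \<le> cond_cdf f x t" "\<And>t. cond_cdf f x t \<le> 1"
    "\<And>a b. a \<le> b \<Longrightarrow> cond_cdf f x a \<le> cond_cdf f x b"
    "\<And>a b. a \<le> b \<Longrightarrow> (b - a) * cond_cdf f x a \<le> Hx x b - Hx x a"
    "\<And>a b. a \<le> b \<Longrightarrow> Hx x b - Hx x a \<le> (b - a) * cond_cdf f x b"
    "\<And>t. 0 \<le> Hx x t"
    "\<And>t. integrable lborel (\<lambda>y. f x y * ((t - y) * indicator {..t} y))"
proof -
  interpret D: dens2 "f x" using g by (simp add: good_def)
  have F: "D.F = cond_cdf f x" using good_F[OF g] .
  have H: "D.H = Hx x" using good_H[OF g] .
  have q: "quantile D.F \<alpha> = Q" "expected_shortfall D.F \<alpha> = E" "\<exists>\<epsilon>>0. (\<forall>y\<in>ball Q \<epsilon>. 0 < f x y) \<and> continuous_on (ball Q \<epsilon>) (f x) \<and> bounded (f x ` ball Q \<epsilon>)"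
    using g by (auto simp: good_def F Q_def E_def)
  note gf = D.good_facts[OF alpha q]
  show "cond_cdf f x Q = \<alpha>" using gf(1) F by simp
  show "Hx x Q = \<alpha> * Q - \<alpha> * E" using gf(2) H by simp
  show "isCont (cond_cdf f x) Q" using gf(3) F by simp
  show "\<exists>c>0. \<exists>e>0. \<forall>s. \<bar>s\<bar> \<le> e \<longrightarrow> c * s\<^sup>2 \<le> s * (cond_cdf f x (Q + s) - cond_cdf f x Q)"
    using gf(4) F by simp
  show "\<And>s. 0 \<le> Hx x (Q + s) - Hx x Q - s * cond_cdf f x Q \<and> Hx x (Q + s) - Hx x Q - s * cond_cdf f x Q \<le> s * (cond_cdf f x (Q + s) - cond_cdf f x Q)"
    using D.H_incr2 F H by simp
  show "\<And>t. 0 \<le> cond_cdf f x t" using D.F_nonneg F by simp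
  show "\<And>t. cond_cdf f x t \<le> 1" using D.F_le1 F by simp
  show "\<And>a b. a \<le> b \<Longrightarrow> cond_cdf f x a \<le> cond_cdf f x b" using D.F_mono F by simp
  show "\<And>a b. a \<le> b \<Longrightarrow> (b - a) * cond_cdf f x a \<le> Hx x b - Hx x a" using D.H_incr(1) F H by simp
  show "\<And>a b. a \<le> b \<Longrightarrow> Hx x b - Hx x a \<le> (b - a) * cond_cdf f x b" using D.H_incr(2) F H by simp
  show "\<And>t. 0 \<le> Hx x t" unfolding H[symmetric] D.H_def
    by (rule integral_nonneg_AE) (auto intro!: mult_nonneg_nonneg D.pnn simp: indicator_def)
  show "\<And>t. integrable lborel (\<lambda>y. f x y * ((t - y) * indicator {..t} y))" by (rule D.H_int)
qed

lemma dist_fst: "\<theta> \<in> U \<Longrightarrow> maxnorm (fst \<theta> - fst th0) \<le> d0"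
  using U_sub maxnorm2_fst[of "\<theta> - th0"] by fastforce

lemma dist_snd: "\<theta> \<in> U \<Longrightarrow> maxnorm (snd \<theta> - snd th0) \<le> d0"
  using U_sub maxnorm2_snd[of "\<theta> - th0"] by fastforce

lemma good_H_bound:
  assumes g: "good x" and th: "\<theta> \<in> U"
  shows "Hx x (x \<bullet> fst \<theta>) \<le> real CARD('k) * maxnorm x * (2 * R0)"
proof -
  define Q where "Q = x \<bullet> fst th0"
  define E where "E = x \<bullet> snd th0"
  define t where "t = x \<bullet> fst \<theta>"
  note gf = good_facts2[OF g, folded Q_def E_def]
  have "\<bar>t - Q\<bar> = \<bar>x \<bullet> (fst \<theta> - fst th0)\<bar>" by (simp add: t_def Q_def inner_diff_right)
  also have "\<dots> \<le> real CARD('k) * maxnorm x * d0" by (rule inner_sel_bound[OF dist_fst[OF th]])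
  finally have tQ: "\<bar>t - Q\<bar> \<le> real CARD('k) * maxnorm x * d0" .
  have Qb: "\<bar>Q\<bar> \<le> real CARD('k) * maxnorm x * maxnorm2 th0"
    unfolding Q_def by (rule inner_sel_bound[OF maxnorm2_fst])
  have Eb: "\<bar>E\<bar> \<le> real CARD('k) * maxnorm x * maxnorm2 th0"
    unfolding E_def by (rule inner_sel_bound[OF maxnorm2_snd])
  have HQ: "Hx x Q \<le> \<bar>Q\<bar> + \<bar>E\<bar>"
  proof -
    have "Hx x Q = \<alpha> * (Q - E)" using gf(2) by (simp add: algebra_simps)
    also have "\<dots> \<le> \<bar>\<alpha> * (Q - E)\<bar>" by simp
    also have "\<dots> \<le> 1 * \<bar>Q - E\<bar>" unfolding abs_mult using alpha by (intro mult_right_mono) auto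
    finally show ?thesis by simp
  qed
  have "Hx x t \<le> Hx x Q + \<bar>t - Q\<bar>"
  proof (cases "Q \<le> t")
    case True
    have "Hx x t - Hx x Q \<le> (t - Q) * cond_cdf f x t" by (rule gf(10)[OF True])
    also have "\<dots> \<le> (t - Q) * 1" using True gf(7)[of t] by (intro mult_left_mono) auto
    finally show ?thesis by simp
  next
    case False
    have "(Q - t) * cond_cdf f x t \<le> Hx x Q - Hx x t" by (rule gf(9)) (use False in simp)
    moreover have "0 \<le> (Q - t) * cond_cdf f x t" using False gf(6)[of t] by simp
    ultimately show ?thesis by simp
  qed
  also have "\<dots> \<le> real CARD('k) * maxnorm x * maxnorm2 th0 + real CARD('k) * maxnorm x * maxnorm2 th0 + real CARD('k) * maxnorm x * d0"
    using HQ Qb Eb tQ by linarith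
  also have "\<dots> \<le> real CARD('k) * maxnorm x * (2 * R0)"
    unfolding R0_def using d0 maxnorm_nonneg[of x] by (simp add: algebra_simps)
  finally show ?thesis by (simp add: t_def)
qed

lemma int_m2G2d:
  assumes th: "\<theta> \<in> U"
  shows "integrable M (\<lambda>\<omega>. maxnorm (X \<omega>) ^ 2 * G2d (X \<omega> \<bullet> snd \<theta>))"
proof -
  obtain B where B: "B \<ge> 0" "\<And>(x::real^'k) \<tau>. \<tau> \<in> U \<Longrightarrow> maxnorm x ^ 2 * G2d (x \<bullet> snd \<tau>) \<le> 1 + B + maxnorm x ^ 5 * (SUP \<tau>\<in>U. G2d (x \<bullet> snd \<tau>))\<^sup>2"
    using pw_sup2[OF cG2d less_imp_le[OF G2d_pos[rule_format]] U_snd] U_ne by blast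
  have hi: "integrable M (\<lambda>\<omega>. 1 + B + maxnorm (X \<omega>) ^ 5 * (SUP \<tau>\<in>U. G2d (X \<omega> \<bullet> snd \<tau>))\<^sup>2)"
    using m9 by auto
  show ?thesis
  proof (rule Bochner_Integration.integrable_bound[OF hi])
    show "(\<lambda>\<omega>. maxnorm (X \<omega>) ^ 2 * G2d (X \<omega> \<bullet> snd \<theta>)) \<in> borel_measurable M" by measurable
    show "AE \<omega> in M. norm (maxnorm (X \<omega>) ^ 2 * G2d (X \<omega> \<bullet> snd \<theta>)) \<le> norm (1 + B + maxnorm (X \<omega>) ^ 5 * (SUP \<tau>\<in>U. G2d (X \<omega> \<bullet> snd \<tau>))\<^sup>2)"
    proof (intro AE_I2)
      fix \<omega>
      have "0 \<le> maxnorm (X \<omega>) ^ 2 * G2d (X \<omega> \<bullet> snd \<theta>)"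
        using G2d_pos by (simp add: less_imp_le)
      then show "norm (maxnorm (X \<omega>) ^ 2 * G2d (X \<omega> \<bullet> snd \<theta>)) \<le> norm (1 + B + maxnorm (X \<omega>) ^ 5 * (SUP \<tau>\<in>U. G2d (X \<omega> \<bullet> snd \<tau>))\<^sup>2)"
        using B(2)[OF th, of "X \<omega>"] by simp
    qed
  qed
qed

lemma w2_int:
  assumes th: "\<theta> \<in> U"
  shows "integrable M (\<lambda>\<omega>. G2d (X \<omega> \<bullet> snd \<theta>) * maxnorm (X \<omega>) * ((X \<omega> \<bullet> fst \<theta> - Y \<omega>) * (if Y \<omega> \<le> X \<omega> \<bullet> fst \<theta> then 1 else 0)))"
    (is "integrable M ?w")
proof (rule integrableI_nonneg)
  show "?w \<in> borel_measurable M" by measurable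
  show "AE \<omega> in M. 0 \<le> ?w \<omega>"
    using G2d_pos by (intro AE_I2) (auto intro!: mult_nonneg_nonneg simp: maxnorm_nonneg less_imp_le)
  define g where "g z = ennreal (G2d (fst z \<bullet> snd \<theta>) * maxnorm (fst z) * ((fst z \<bullet> fst \<theta> - snd z) * (if snd z \<le> fst z \<bullet> fst \<theta> then 1 else 0)))" for z :: "(real^'k) \<times> real"
  have gm: "g \<in> borel_measurable (borel \<Otimes>\<^sub>M borel)" unfolding g_def by measurable
  have "(\<integral>\<^sup>+\<omega>. ennreal (?w \<omega>) \<partial>M) = (\<integral>\<^sup>+\<omega>. g (X \<omega>, Y \<omega>) \<partial>M)" by (simp add: g_def)
  also have "\<dots> = (\<integral>\<^sup>+x. \<integral>\<^sup>+y. ennreal (f x y) * g (x, y) \<partial>lborel \<partial>J.PX)"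
    by (rule J.joint_nn[OF gm])
  also have "\<dots> \<le> (\<integral>\<^sup>+x. ennreal (real CARD('k) * (2 * R0) * (maxnorm x ^ 2 * G2d (x \<bullet> snd \<theta>))) \<partial>J.PX)"
  proof (rule nn_integral_mono_AE)
    show "AE x in J.PX. (\<integral>\<^sup>+y. ennreal (f x y) * g (x, y) \<partial>lborel) \<le> ennreal (real CARD('k) * (2 * R0) * (maxnorm x ^ 2 * G2d (x \<bullet> snd \<theta>)))"
      using AE_good
    proof eventually_elim
      case (elim x)
      note gf = good_facts2[OF elim]
      define c where "c = G2d (x \<bullet> snd \<theta>) * maxnorm x"
      have c0: "0 \<le> c" unfolding c_def using G2d_pos by (simp add: maxnorm_nonneg less_imp_le)
      have "(\<integral>\<^sup>+y. ennreal (f x y) * g (x, y) \<partial>lborel) = (\<integral>\<^sup>+y. ennreal (c * (f x y * ((x \<bullet> fst \<theta> - y) * indicator {..x \<bullet> fst \<theta>} y))) \<partial>lborel)"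
      proof (rule nn_integral_cong)
        fix y
        have "ennreal (f x y) * g (x, y) = ennreal (f x y * (c * ((x \<bullet> fst \<theta> - y) * (if y \<le> x \<bullet> fst \<theta> then 1 else 0))))"
          unfolding g_def c_def using J.f_nn[of x y] c0[unfolded c_def]
          by (subst ennreal_mult[symmetric]) (auto intro!: mult_nonneg_nonneg)
        then show "ennreal (f x y) * g (x, y) = ennreal (c * (f x y * ((x \<bullet> fst \<theta> - y) * indicator {..x \<bullet> fst \<theta>} y)))"
          by (simp add: indicator_def algebra_simps)
      qed
      also have "\<dots> = ennreal (LINT y|lborel. c * (f x y * ((x \<bullet> fst \<theta> - y) * indicator {..x \<bullet> fst \<theta>} y)))"
        by (rule nn_integral_eq_integral) (use gf(12) J.f_nn c0 in \<open>auto intro!: mult_nonneg_nonneg simp: indicator_def\<close>)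
      also have "\<dots> = ennreal (c * Hx x (x \<bullet> fst \<theta>))" by (simp add: Hx_def)
      also have "\<dots> \<le> ennreal (c * (real CARD('k) * maxnorm x * (2 * R0)))"
        using good_H_bound[OF elim th] c0 by (intro ennreal_leI mult_left_mono) auto
      also have "\<dots> = ennreal (real CARD('k) * (2 * R0) * (maxnorm x ^ 2 * G2d (x \<bullet> snd \<theta>)))"
        by (simp add: c_def power2_eq_square algebra_simps)
      finally show ?case .
    qed
  qed
  also have "\<dots> = (\<integral>\<^sup>+\<omega>. ennreal (real CARD('k) * (2 * R0) * (maxnorm (X \<omega>) ^ 2 * G2d (X \<omega> \<bullet> snd \<theta>))) \<partial>M)"
    unfolding J.PX_def by (rule nn_integral_distr) auto
  also have "\<dots> < \<infinity>"
  proof -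
    have "integrable M (\<lambda>\<omega>. real CARD('k) * (2 * R0) * (maxnorm (X \<omega>) ^ 2 * G2d (X \<omega> \<bullet> snd \<theta>)))"
      using int_m2G2d[OF th] by auto
    then have fin: "(\<integral>\<^sup>+\<omega>. ennreal (norm (real CARD('k) * (2 * R0) * (maxnorm (X \<omega>) ^ 2 * G2d (X \<omega> \<bullet> snd \<theta>)))) \<partial>M) < \<infinity>"
      unfolding integrable_iff_bounded by (rule conjunct2)
    have nn: "0 \<le> real CARD('k) * (2 * R0) * (maxnorm (X \<omega>) ^ 2 * G2d (X \<omega> \<bullet> snd \<theta>))" for \<omega>
      using G2d_pos d0 maxnorm2_nonneg[of th0] by (auto intro!: mult_nonneg_nonneg simp: R0_def less_imp_le)
    have "(\<integral>\<^sup>+\<omega>. ennreal (norm (real CARD('k) * (2 * R0) * (maxnorm (X \<omega>) ^ 2 * G2d (X \<omega> \<bullet> snd \<theta>)))) \<partial>M)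
       = (\<integral>\<^sup>+\<omega>. ennreal (real CARD('k) * (2 * R0) * (maxnorm (X \<omega>) ^ 2 * G2d (X \<omega> \<bullet> snd \<theta>))) \<partial>M)"
      by (rule nn_integral_cong) (use nn in simp)
    with fin show ?thesis by simp
  qed
  finally show "(\<integral>\<^sup>+\<omega>. ennreal (?w \<omega>) \<partial>M) < \<infinity>" .
qed

lemma psi2_int:
  assumes th: "\<theta> \<in> U"
  shows "integrable M (\<lambda>\<omega>. psi2 \<alpha> G2d (Y \<omega>) (X \<omega>) \<theta>)"
proof -
  define w where "w \<omega> = G2d (X \<omega> \<bullet> snd \<theta>) * maxnorm (X \<omega>) * ((X \<omega> \<bullet> fst \<theta> - Y \<omega>) * (if Y \<omega> \<le> X \<omega> \<bullet> fst \<theta> then 1 else 0))" for \<omega>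
  define h where "h \<omega> = real CARD('k) * (2 * real CARD('k) * R0) * (maxnorm (X \<omega>) ^ 2 * G2d (X \<omega> \<bullet> snd \<theta>)) + (real CARD('k) / \<alpha>) * w \<omega>" for \<omega>
  have hi: "integrable M h"
    unfolding h_def w_def using int_m2G2d[OF th] w2_int[OF th]
    by (intro Bochner_Integration.integrable_add integrable_mult_right) auto
  show ?thesis
  proof (rule Bochner_Integration.integrable_bound[OF hi])
    show "(\<lambda>\<omega>. psi2 \<alpha> G2d (Y \<omega>) (X \<omega>) \<theta>) \<in> borel_measurable M"
      unfolding psi2_def by measurable
    show "AE \<omega> in M. norm (psi2 \<alpha> G2d (Y \<omega>) (X \<omega>) \<theta>) \<le> norm (h \<omega>)"
    proof (intro AE_I2)
      fix \<omega>
      define x where "x = X \<omega>"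
      define y where "y = Y \<omega>"
      define z where "z = (x \<bullet> fst \<theta> - y) * (if y \<le> x \<bullet> fst \<theta> then 1 else 0)"
      have z0: "0 \<le> z" by (simp add: z_def)
      have g0: "0 < G2d (x \<bullet> snd \<theta>)" using G2d_pos by simp
      have m0: "0 \<le> maxnorm x" by (rule maxnorm_nonneg)
      have b1: "\<bar>x \<bullet> snd \<theta>\<bar> \<le> real CARD('k) * maxnorm x * R0" using U_snd th inner_sel_bound by blast
      have b2: "\<bar>x \<bullet> fst \<theta>\<bar> \<le> real CARD('k) * maxnorm x * R0" using U_fst th inner_sel_bound by blast
      have "norm (psi2 \<alpha> G2d (Y \<omega>) (X \<omega>) \<theta>) = G2d (x \<bullet> snd \<theta>) * \<bar>x \<bullet> snd \<theta> - x \<bullet> fst \<theta> + (1 / \<alpha>) * z\<bar> * norm x"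
        using g0 by (simp add: psi2_def x_def y_def z_def abs_mult)
      also have "\<dots> \<le> G2d (x \<bullet> snd \<theta>) * (2 * real CARD('k) * maxnorm x * R0 + (1 / \<alpha>) * z) * (real CARD('k) * maxnorm x)"
      proof (intro mult_mono mult_left_mono)
        show "\<bar>x \<bullet> snd \<theta> - x \<bullet> fst \<theta> + 1 / \<alpha> * z\<bar> \<le> 2 * real CARD('k) * maxnorm x * R0 + 1 / \<alpha> * z"
        proof -
          have "0 \<le> 1 / \<alpha> * z" using z0 alpha by simp
          then show ?thesis using b1 b2 by linarith
        qed
        show "norm x \<le> real CARD('k) * maxnorm x" by (rule norm_le_maxnorm)
      qed (use g0 z0 alpha m0 R0_nn in \<open>auto intro!: mult_nonneg_nonneg add_nonneg_nonneg\<close>)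
      also have "\<dots> = h \<omega>"
        unfolding h_def w_def x_def[symmetric] y_def[symmetric] z_def[symmetric] using alpha
        by (simp add: power2_eq_square field_simps)
      also have "\<dots> \<le> norm (h \<omega>)" by simp
      finally show "norm (psi2 \<alpha> G2d (Y \<omega>) (X \<omega>) \<theta>) \<le> norm (h \<omega>)" .
    qed
  qed
qed

definition "A1 \<theta> w x = (1 / \<alpha>) * (cond_cdf f x (x \<bullet> fst \<theta>) - \<alpha>) * (\<alpha> * G1d (x \<bullet> fst \<theta>) + G2 (x \<bullet> snd \<theta>)) * (x \<bullet> w)"
definition "B2 \<theta> w x = G2d (x \<bullet> snd \<theta>) * (x \<bullet> snd \<theta> - x \<bullet> fst \<theta> + (1 / \<alpha>) * Hx x (x \<bullet> fst \<theta>)) * (x \<bullet> w)"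

lemma A1_meas[measurable]: "A1 \<theta> w \<in> borel_measurable borel"
proof -
  have [measurable]: "(\<lambda>x. cond_cdf f x (x \<bullet> fst \<theta>)) \<in> borel_measurable borel"
    by (rule J.Fx_meas) simp
  show ?thesis unfolding A1_def[abs_def] by measurable
qed

lemma B2_meas[measurable]: "B2 \<theta> w \<in> borel_measurable borel"
proof -
  have [measurable]: "(\<lambda>x. Hx x (x \<bullet> fst \<theta>)) \<in> borel_measurable borel"
    unfolding Hx_def by (rule J.Hx_meas) simp
  show ?thesis unfolding B2_def[abs_def] by measurable
qed

lemma good_int1: "good x \<Longrightarrow> integrable lborel (f x) \<and> integral\<^sup>L lborel (f x) = 1"
  using good_d2[of x] by (simp add: dens2_def dens1_def)

lemma good_intind: "good x \<Longrightarrow> A \<in> sets borel \<Longrightarrow> integrable lborel (\<lambda>y. f x y * indicator A y)"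
  using dens1.int_ind[of "f x" A] good_d2[of x] by (simp add: dens2_def)

lemma rep1:
  assumes th: "\<theta> \<in> U"
  shows "w \<bullet> (LINT \<omega>|M. psi1 \<alpha> G1d G2 (Y \<omega>) (X \<omega>) \<theta>) = (LINT x|J.PX. A1 \<theta> w x)"
    and "integrable J.PX (A1 \<theta> w)"
proof -
  define g where "g x y = (1 / \<alpha>) * ((if y \<le> x \<bullet> fst \<theta> then 1 else 0) - \<alpha>) * (\<alpha> * G1d (x \<bullet> fst \<theta>) + G2 (x \<bullet> snd \<theta>)) * (x \<bullet> w)" for x y
  have gm: "(\<lambda>(x, y). g x y) \<in> borel_measurable (borel \<Otimes>\<^sub>M borel)" unfolding g_def by measurable
  have eqg: "w \<bullet> psi1 \<alpha> G1d G2 (Y \<omega>) (X \<omega>) \<theta> = g (X \<omega>) (Y \<omega>)" for \<omega>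
    by (simp add: psi1_def g_def inner_commute)
  have gi: "integrable M (\<lambda>\<omega>. g (X \<omega>) (Y \<omega>))"
    using integrable_inner_right[OF psi1_int[OF th], of w] eqg by simp
  have AEeq: "AE x in J.PX. (LINT y|lborel. f x y * g x y) = A1 \<theta> w x"
    using AE_good
  proof eventually_elim
    case (elim x)
    define c where "c = (1 / \<alpha>) * (\<alpha> * G1d (x \<bullet> fst \<theta>) + G2 (x \<bullet> snd \<theta>)) * (x \<bullet> w)"
    have "(LINT y|lborel. f x y * g x y) = (LINT y|lborel. c * (f x y * indicator {..x \<bullet> fst \<theta>} y) - c * \<alpha> * f x y)"
      by (rule Bochner_Integration.integral_cong) (auto simp: g_def c_def indicator_def algebra_simps)
    also have "\<dots> = c * (LINT y|lborel. f x y * indicator {..x \<bullet> fst \<theta>} y) - c * \<alpha> * (LINT y|lborel. f x y)"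
      using good_intind[OF elim, of "{..x \<bullet> fst \<theta>}"] good_int1[OF elim] by simp
    also have "\<dots> = c * (cond_cdf f x (x \<bullet> fst \<theta>) - \<alpha>)"
      using good_int1[OF elim]
      by (simp add: cond_cdf_def set_lebesgue_integral_def mult.commute right_diff_distrib)
    also have "\<dots> = A1 \<theta> w x"
      unfolding A1_def c_def by (simp add: mult.commute mult.left_commute)
    finally show ?case .
  qed
  have "w \<bullet> (LINT \<omega>|M. psi1 \<alpha> G1d G2 (Y \<omega>) (X \<omega>) \<theta>) = (LINT \<omega>|M. g (X \<omega>) (Y \<omega>))"
    using integral_inner_right[OF psi1_int[OF th], of w] eqg by simp
  also have "\<dots> = (LINT x|J.PX. LINT y|lborel. f x y * g x y)" by (rule J.joint_int(1)[OF gm gi])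
  also have "\<dots> = (LINT x|J.PX. A1 \<theta> w x)"
    by (rule integral_cong_AE) (use J.joint_int(3)[OF gm gi] AEeq in auto)
  finally show "w \<bullet> (LINT \<omega>|M. psi1 \<alpha> G1d G2 (Y \<omega>) (X \<omega>) \<theta>) = (LINT x|J.PX. A1 \<theta> w x)" .
  have "integrable J.PX (\<lambda>x. LINT y|lborel. f x y * g x y)" by (rule J.joint_int(3)[OF gm gi])
  then show "integrable J.PX (A1 \<theta> w)"
    by (rule integrable_cong_AE_imp) (use AEeq in auto)
qed

lemma rep2:
  assumes th: "\<theta> \<in> U"
  shows "w \<bullet> (LINT \<omega>|M. psi2 \<alpha> G2d (Y \<omega>) (X \<omega>) \<theta>) = (LINT x|J.PX. B2 \<theta> w x)"
    and "integrable J.PX (B2 \<theta> w)"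
proof -
  define g where "g x y = G2d (x \<bullet> snd \<theta>) * (x \<bullet> snd \<theta> - x \<bullet> fst \<theta> + (1 / \<alpha>) * (x \<bullet> fst \<theta> - y) * (if y \<le> x \<bullet> fst \<theta> then 1 else 0)) * (x \<bullet> w)" for x y
  have gm: "(\<lambda>(x, y). g x y) \<in> borel_measurable (borel \<Otimes>\<^sub>M borel)" unfolding g_def by measurable
  have eqg: "w \<bullet> psi2 \<alpha> G2d (Y \<omega>) (X \<omega>) \<theta> = g (X \<omega>) (Y \<omega>)" for \<omega>
    by (simp add: psi2_def g_def inner_commute)
  have gi: "integrable M (\<lambda>\<omega>. g (X \<omega>) (Y \<omega>))"
    using integrable_inner_right[OF psi2_int[OF th], of w] eqg by simp
  have AEeq: "AE x in J.PX. (LINT y|lborel. f x y * g x y) = B2 \<theta> w x"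
    using AE_good
  proof eventually_elim
    case (elim x)
    define c where "c = G2d (x \<bullet> snd \<theta>) * (x \<bullet> w)"
    define D where "D = x \<bullet> snd \<theta> - x \<bullet> fst \<theta>"
    have "(LINT y|lborel. f x y * g x y) = (LINT y|lborel. c * D * f x y + c / \<alpha> * (f x y * ((x \<bullet> fst \<theta> - y) * indicator {..x \<bullet> fst \<theta>} y)))"
      by (rule Bochner_Integration.integral_cong) (auto simp: g_def c_def D_def indicator_def algebra_simps)
    also have "\<dots> = c * D * (LINT y|lborel. f x y) + c / \<alpha> * Hx x (x \<bullet> fst \<theta>)"
      using good_int1[OF elim] good_facts2(12)[OF elim, of "x \<bullet> fst \<theta>"] by (simp add: Hx_def)
    also have "\<dots> = B2 \<theta> w x"
      using good_int1[OF elim] unfolding B2_def c_def D_def by (simp add: algebra_simps)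
    finally show ?case .
  qed
  have "w \<bullet> (LINT \<omega>|M. psi2 \<alpha> G2d (Y \<omega>) (X \<omega>) \<theta>) = (LINT \<omega>|M. g (X \<omega>) (Y \<omega>))"
    using integral_inner_right[OF psi2_int[OF th], of w] eqg by simp
  also have "\<dots> = (LINT x|J.PX. LINT y|lborel. f x y * g x y)" by (rule J.joint_int(1)[OF gm gi])
  also have "\<dots> = (LINT x|J.PX. B2 \<theta> w x)"
    by (rule integral_cong_AE) (use J.joint_int(3)[OF gm gi] AEeq in auto)
  finally show "w \<bullet> (LINT \<omega>|M. psi2 \<alpha> G2d (Y \<omega>) (X \<omega>) \<theta>) = (LINT x|J.PX. B2 \<theta> w x)" .
  have "integrable J.PX (\<lambda>x. LINT y|lborel. f x y * g x y)" by (rule J.joint_int(3)[OF gm gi])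
  then show "integrable J.PX (B2 \<theta> w)"
    by (rule integrable_cong_AE_imp) (use AEeq in auto)
qed

definition "Rr \<theta> x = (Hx x (x \<bullet> fst \<theta>) - Hx x (x \<bullet> fst th0) - (x \<bullet> (fst \<theta> - fst th0)) * cond_cdf f x (x \<bullet> fst th0)) / \<alpha>"

lemma Rr_meas[measurable]: "Rr \<theta> \<in> borel_measurable borel"
proof -
  have [measurable]: "(\<lambda>x. Hx x (x \<bullet> fst \<theta>)) \<in> borel_measurable borel"
    unfolding Hx_def by (rule J.Hx_meas) simp
  have [measurable]: "(\<lambda>x. Hx x (x \<bullet> fst th0)) \<in> borel_measurable borel"
    unfolding Hx_def by (rule J.Hx_meas) simp
  have [measurable]: "(\<lambda>x. cond_cdf f x (x \<bullet> fst th0)) \<in> borel_measurable borel"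
    by (rule J.Fx_meas) simp
  show ?thesis unfolding Rr_def[abs_def] by measurable
qed

lemma decomp:
  fixes \<theta> :: "(real^'k) \<times> (real^'k)" and x :: "real^'k"
  assumes g: "good x"
  defines "Q \<equiv> x \<bullet> fst th0" and "s \<equiv> x \<bullet> (fst \<theta> - fst th0)"
  shows "A1 \<theta> (fst \<theta> - fst th0) x = (1 / \<alpha>) * (\<alpha> * G1d (x \<bullet> fst \<theta>) + G2 (x \<bullet> snd \<theta>)) * (s * (cond_cdf f x (Q + s) - cond_cdf f x Q))"
    and "B2 \<theta> (snd \<theta> - snd th0) x = G2d (x \<bullet> snd \<theta>) * (x \<bullet> (snd \<theta> - snd th0))\<^sup>2 + G2d (x \<bullet> snd \<theta>) * (x \<bullet> (snd \<theta> - snd th0)) * Rr \<theta> x"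
    and "0 \<le> \<alpha> * Rr \<theta> x" "\<alpha> * Rr \<theta> x \<le> s * (cond_cdf f x (Q + s) - cond_cdf f x Q)"
proof -
  note gf = good_facts2[OF g, folded Q_def]
  have t: "x \<bullet> fst \<theta> = Q + s" by (simp add: Q_def s_def inner_diff_right)
  show "A1 \<theta> (fst \<theta> - fst th0) x = (1 / \<alpha>) * (\<alpha> * G1d (x \<bullet> fst \<theta>) + G2 (x \<bullet> snd \<theta>)) * (s * (cond_cdf f x (Q + s) - cond_cdf f x Q))"
    unfolding A1_def using gf(1) t by (simp add: s_def[symmetric] mult.commute mult.left_commute)
  have R: "\<alpha> * Rr \<theta> x = Hx x (Q + s) - Hx x Q - s * cond_cdf f x Q"
    unfolding Rr_def using alpha t by (simp add: Q_def[symmetric] s_def[symmetric])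
  show "0 \<le> \<alpha> * Rr \<theta> x" "\<alpha> * Rr \<theta> x \<le> s * (cond_cdf f x (Q + s) - cond_cdf f x Q)"
    unfolding R using gf(5)[of s] by auto
  have e: "x \<bullet> snd \<theta> - x \<bullet> fst \<theta> + (1 / \<alpha>) * Hx x (x \<bullet> fst \<theta>) = x \<bullet> (snd \<theta> - snd th0) + Rr \<theta> x"
  proof -
    have "Hx x (x \<bullet> fst \<theta>) = Hx x Q + s * \<alpha> + \<alpha> * Rr \<theta> x" using R gf(1) t by simp
    also have "\<dots> = \<alpha> * Q - \<alpha> * (x \<bullet> snd th0) + s * \<alpha> + \<alpha> * Rr \<theta> x" using gf(2) by simp
    finally have "(1 / \<alpha>) * Hx x (x \<bullet> fst \<theta>) = Q - x \<bullet> snd th0 + s + Rr \<theta> x"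
      using alpha by (simp add: field_simps)
    then show ?thesis using t by (simp add: inner_diff_right)
  qed
  show "B2 \<theta> (snd \<theta> - snd th0) x = G2d (x \<bullet> snd \<theta>) * (x \<bullet> (snd \<theta> - snd th0))\<^sup>2 + G2d (x \<bullet> snd \<theta>) * (x \<bullet> (snd \<theta> - snd th0)) * Rr \<theta> x"
    unfolding B2_def e by (simp add: power2_eq_square algebra_simps)
qed

lemma pd_zero:
  assumes ae: "AE x in J.PX. x \<bullet> w = 0"
  shows "w = 0"
proof (rule ccontr)
  assume nz: "w \<noteq> 0"
  define A where "A = (\<chi> i j. LINT \<omega>|M. X \<omega> $ i * X \<omega> $ j)"
  have pos: "0 < w \<bullet> (A *v w)" using XX_pd nz unfolding pos_def_def A_def by blast
  have aeM: "AE \<omega> in M. X \<omega> \<bullet> w = 0"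
    using AE_distrD[OF rvX ae[unfolded J.PX_def]] .
  have "w \<bullet> (A *v w) = (\<Sum>i\<in>UNIV. \<Sum>j\<in>UNIV. w $ i * w $ j * (LINT \<omega>|M. X \<omega> $ i * X \<omega> $ j))"
    unfolding inner_vec_def matrix_vector_mult_def A_def sum_distrib_left
    by (intro sum.cong refl) (simp add: sum_distrib_left ac_simps)
  also have "\<dots> = (\<Sum>i\<in>UNIV. \<Sum>j\<in>UNIV. (LINT \<omega>|M. w $ i * w $ j * (X \<omega> $ i * X \<omega> $ j)))"
    by simp
  also have "\<dots> = (LINT \<omega>|M. (\<Sum>i\<in>UNIV. \<Sum>j\<in>UNIV. w $ i * w $ j * (X \<omega> $ i * X \<omega> $ j)))"
    using XX_int by (simp add: Bochner_Integration.integral_sum integrable_sum)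
  also have "\<dots> = (LINT \<omega>|M. (X \<omega> \<bullet> w)\<^sup>2)"
    by (rule Bochner_Integration.integral_cong)
       (simp_all add: power2_eq_square inner_vec_def sum_product mult.commute mult.left_commute)
  also have "\<dots> = 0"
    by (rule integral_eq_zero_AE) (use aeM in \<open>auto elim!: eventually_mono\<close>)
  finally show False using pos by simp
qed

end

context L3 begin

lemma int_const[simp]: "integrable M (\<lambda>_. c::real)"
proof -
  interpret P: prob_space M by (rule prob)
  show ?thesis by simp
qed

lemma inner_conv:
  fixes a :: "nat \<Rightarrow> real^'k"
  assumes "(\<lambda>n. maxnorm (a n - a0)) \<longlonglongrightarrow> 0"
  shows "(\<lambda>n. x \<bullet> a n) \<longlonglongrightarrow> x \<bullet> a0"
proof -
  have "(\<lambda>n. x \<bullet> a n - x \<bullet> a0) \<longlonglongrightarrow> 0"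
  proof (rule Lim_null_comparison)
    show "\<forall>\<^sub>F n in sequentially. norm (x \<bullet> a n - x \<bullet> a0) \<le> real CARD('k) * maxnorm x * maxnorm (a n - a0)"
      using inner_sel_bound[of "a _ - a0" "maxnorm (a _ - a0)" x] by (simp add: inner_diff_right)
    show "(\<lambda>n. real CARD('k) * maxnorm x * maxnorm (a n - a0)) \<longlonglongrightarrow> 0"
      using tendsto_mult_right_zero[OF assms] by simp
  qed
  then show ?thesis by (simp add: LIM_zero_iff)
qed

lemma c_lim:
  fixes \<theta> :: "nat \<Rightarrow> (real^'k) \<times> (real^'k)"
  assumes \<theta>U: "\<And>n. \<theta> n \<in> U" and rpos: "\<And>n. 0 < r n" and rdef: "\<And>n. r n = maxnorm2 (\<theta> n - th0)"
    and r0: "r \<longlonglongrightarrow> 0"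
  shows "(\<lambda>n. LINT x|J.PX. G2d (x \<bullet> snd (\<theta> n)) * (x \<bullet> (snd (\<theta> n) - snd th0)) * Rr (\<theta> n) x / (r n)\<^sup>2) \<longlonglongrightarrow> 0"
proof -
  define c where "c n x = G2d (x \<bullet> snd (\<theta> n)) * (x \<bullet> (snd (\<theta> n) - snd th0)) * Rr (\<theta> n) x / (r n)\<^sup>2" for n x
  have cm[measurable]: "c n \<in> borel_measurable borel" for n unfolding c_def[abs_def] by measurable
  have mu: "maxnorm (fst (\<theta> n) - fst th0) \<le> r n" for n using maxnorm2_fst[of "\<theta> n - th0"] rdef by simp
  have mv: "maxnorm (snd (\<theta> n) - snd th0) \<le> r n" for n using maxnorm2_snd[of "\<theta> n - th0"] rdef by simp
  obtain B where B: "B \<ge> 0" "\<And>(x::real^'k) \<tau>. \<tau> \<in> U \<Longrightarrow> maxnorm x ^ 2 * G2d (x \<bullet> snd \<tau>) \<le> 1 + B + maxnorm x ^ 5 * (SUP \<tau>\<in>U. G2d (x \<bullet> snd \<tau>))\<^sup>2"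
    using pw_sup2[OF cG2d less_imp_le[OF G2d_pos[rule_format]] U_snd] U_ne by blast
  define w where "w \<omega> = (real CARD('k))\<^sup>2 / \<alpha> * (1 + B + maxnorm (X \<omega>) ^ 5 * (SUP \<tau>\<in>U. G2d (X \<omega> \<bullet> snd \<tau>))\<^sup>2)" for \<omega>
  have wi: "integrable M w" unfolding w_def using m9 by (intro integrable_mult_right Bochner_Integration.integrable_add) auto
  have est: "\<bar>c n x\<bar> \<le> G2d (x \<bullet> snd (\<theta> n)) * (real CARD('k) * maxnorm x) * (real CARD('k) * maxnorm x * \<bar>cond_cdf f x (x \<bullet> fst th0 + x \<bullet> (fst (\<theta> n) - fst th0)) - cond_cdf f x (x \<bullet> fst th0)\<bar> / \<alpha>)"
    if g: "good x" for n x
  proof -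
    define s where "s = x \<bullet> (fst (\<theta> n) - fst th0)"
    define dF where "dF = cond_cdf f x (x \<bullet> fst th0 + s) - cond_cdf f x (x \<bullet> fst th0)"
    note dc = decomp[OF g, of "\<theta> n", folded s_def]
    have sb: "\<bar>s\<bar> \<le> real CARD('k) * maxnorm x * r n" unfolding s_def by (rule inner_sel_bound[OF mu])
    have vb: "\<bar>x \<bullet> (snd (\<theta> n) - snd th0)\<bar> \<le> real CARD('k) * maxnorm x * r n" by (rule inner_sel_bound[OF mv])
    have "\<alpha> * \<bar>Rr (\<theta> n) x\<bar> = \<bar>\<alpha> * Rr (\<theta> n) x\<bar>" using alpha by (simp add: abs_mult)
    also have "\<dots> = \<alpha> * Rr (\<theta> n) x" using dc(3) by simp
    also have "\<dots> \<le> s * dF" using dc(4) unfolding dF_def .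
    also have "\<dots> \<le> \<bar>s\<bar> * \<bar>dF\<bar>" by (simp add: abs_mult[symmetric])
    also have "\<dots> \<le> real CARD('k) * maxnorm x * r n * \<bar>dF\<bar>" using sb by (intro mult_right_mono) auto
    finally have Rb: "\<bar>Rr (\<theta> n) x\<bar> \<le> real CARD('k) * maxnorm x * r n * \<bar>dF\<bar> / \<alpha>"
      using alpha by (simp add: field_simps)
    have g0: "0 < G2d (x \<bullet> snd (\<theta> n))" using G2d_pos by simp
    have r: "0 < r n" by (rule rpos)
    have "\<bar>c n x\<bar> = G2d (x \<bullet> snd (\<theta> n)) * \<bar>x \<bullet> (snd (\<theta> n) - snd th0)\<bar> * \<bar>Rr (\<theta> n) x\<bar> / (r n)\<^sup>2"
      unfolding c_def using g0 by (simp add: abs_mult)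
    also have "\<dots> \<le> G2d (x \<bullet> snd (\<theta> n)) * (real CARD('k) * maxnorm x * r n) * (real CARD('k) * maxnorm x * r n * \<bar>dF\<bar> / \<alpha>) / (r n)\<^sup>2"
      using g0 vb Rb by (intro divide_right_mono mult_mono mult_left_mono) auto
    also have "\<dots> = G2d (x \<bullet> snd (\<theta> n)) * (real CARD('k) * maxnorm x) * (real CARD('k) * maxnorm x * \<bar>dF\<bar> / \<alpha>)"
      using r by (simp add: power2_eq_square field_simps)
    finally show ?thesis by (simp add: dF_def s_def)
  qed
  have bound: "\<bar>c n x\<bar> \<le> (real CARD('k))\<^sup>2 / \<alpha> * (1 + B + maxnorm x ^ 5 * (SUP \<tau>\<in>U. G2d (x \<bullet> snd \<tau>))\<^sup>2)"
    if g: "good x" for n x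
  proof -
    note gf = good_facts2[OF g]
    have dF: "\<bar>cond_cdf f x (x \<bullet> fst th0 + x \<bullet> (fst (\<theta> n) - fst th0)) - cond_cdf f x (x \<bullet> fst th0)\<bar> \<le> 1"
      using gf(6)[of "x \<bullet> fst th0 + x \<bullet> (fst (\<theta> n) - fst th0)"] gf(7)[of "x \<bullet> fst th0 + x \<bullet> (fst (\<theta> n) - fst th0)"]
        gf(6)[of "x \<bullet> fst th0"] gf(7)[of "x \<bullet> fst th0"] by (simp add: abs_le_iff)
    have g0: "0 < G2d (x \<bullet> snd (\<theta> n))" using G2d_pos by simp
    have "\<bar>c n x\<bar> \<le> G2d (x \<bullet> snd (\<theta> n)) * (real CARD('k) * maxnorm x) * (real CARD('k) * maxnorm x * 1 / \<alpha>)"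
    proof (rule order_trans[OF est[OF g, of n]])
      show "G2d (x \<bullet> snd (\<theta> n)) * (real CARD('k) * maxnorm x) * (real CARD('k) * maxnorm x * \<bar>cond_cdf f x (x \<bullet> fst th0 + x \<bullet> (fst (\<theta> n) - fst th0)) - cond_cdf f x (x \<bullet> fst th0)\<bar> / \<alpha>)
          \<le> G2d (x \<bullet> snd (\<theta> n)) * (real CARD('k) * maxnorm x) * (real CARD('k) * maxnorm x * 1 / \<alpha>)"
        using g0 dF alpha maxnorm_nonneg[of x]
        by (intro mult_left_mono divide_right_mono mult_nonneg_nonneg) auto
    qed
    also have "\<dots> = (real CARD('k))\<^sup>2 / \<alpha> * (maxnorm x ^ 2 * G2d (x \<bullet> snd (\<theta> n)))"
      by (simp add: power2_eq_square field_simps)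
    also have "\<dots> \<le> (real CARD('k))\<^sup>2 / \<alpha> * (1 + B + maxnorm x ^ 5 * (SUP \<tau>\<in>U. G2d (x \<bullet> snd \<tau>))\<^sup>2)"
      using B(2)[OF \<theta>U] alpha by (intro mult_left_mono) auto
    finally show ?thesis .
  qed
  have lim: "(\<lambda>n. c n x) \<longlonglongrightarrow> 0" if g: "good x" for x
  proof (rule Lim_null_comparison)
    show "\<forall>\<^sub>F n in sequentially. norm (c n x) \<le> G2d (x \<bullet> snd (\<theta> n)) * (real CARD('k) * maxnorm x) * (real CARD('k) * maxnorm x * \<bar>cond_cdf f x (x \<bullet> fst th0 + x \<bullet> (fst (\<theta> n) - fst th0)) - cond_cdf f x (x \<bullet> fst th0)\<bar> / \<alpha>)"
      using est[OF g] by simp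
    have u0: "(\<lambda>n. maxnorm (fst (\<theta> n) - fst th0)) \<longlonglongrightarrow> 0"
      by (rule tendsto_sandwich[of "\<lambda>_. 0" _ _ r]) (use mu maxnorm_nonneg r0 in \<open>auto intro!: always_eventually\<close>)
    have v0: "(\<lambda>n. maxnorm (snd (\<theta> n) - snd th0)) \<longlonglongrightarrow> 0"
      by (rule tendsto_sandwich[of "\<lambda>_. 0" _ _ r]) (use mv maxnorm_nonneg r0 in \<open>auto intro!: always_eventually\<close>)
    have s0: "(\<lambda>n. x \<bullet> (fst (\<theta> n) - fst th0)) \<longlonglongrightarrow> 0"
      using inner_conv[OF u0, of x] by (simp add: inner_diff_right LIM_zero_iff)
    have G: "(\<lambda>n. G2d (x \<bullet> snd (\<theta> n))) \<longlonglongrightarrow> G2d (x \<bullet> snd th0)"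
      using inner_conv[OF v0, of x] continuous_on_tendsto_compose[OF cG2d] by auto
    have "isCont (cond_cdf f x) (x \<bullet> fst th0)" by (rule good_facts2(3)[OF g])
    then have "(\<lambda>n. cond_cdf f x (x \<bullet> fst th0 + x \<bullet> (fst (\<theta> n) - fst th0))) \<longlonglongrightarrow> cond_cdf f x (x \<bullet> fst th0)"
      using s0 by (intro isCont_tendsto_compose[where g="cond_cdf f x"]) (auto intro: tendsto_eq_intros)
    then have F: "(\<lambda>n. \<bar>cond_cdf f x (x \<bullet> fst th0 + x \<bullet> (fst (\<theta> n) - fst th0)) - cond_cdf f x (x \<bullet> fst th0)\<bar>) \<longlonglongrightarrow> 0"
      by (intro tendsto_rabs_zero) (simp add: LIM_zero_iff)
    show "(\<lambda>n. G2d (x \<bullet> snd (\<theta> n)) * (real CARD('k) * maxnorm x) * (real CARD('k) * maxnorm x * \<bar>cond_cdf f x (x \<bullet> fst th0 + x \<bullet> (fst (\<theta> n) - fst th0)) - cond_cdf f x (x \<bullet> fst th0)\<bar> / \<alpha>)) \<longlonglongrightarrow> 0"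
    proof -
      have "(\<lambda>n. G2d (x \<bullet> snd (\<theta> n)) * (real CARD('k) * maxnorm x) * (real CARD('k) * maxnorm x * \<bar>cond_cdf f x (x \<bullet> fst th0 + x \<bullet> (fst (\<theta> n) - fst th0)) - cond_cdf f x (x \<bullet> fst th0)\<bar> / \<alpha>))
          \<longlonglongrightarrow> G2d (x \<bullet> snd th0) * (real CARD('k) * maxnorm x) * (real CARD('k) * maxnorm x * 0 / \<alpha>)"
        by (intro tendsto_intros G F) (use alpha in auto)
      then show ?thesis by simp
    qed
  qed
  have AEM: "AE \<omega> in M. good (X \<omega>)" by (rule AE_distrD[OF rvX AE_good[unfolded J.PX_def]])
  have "(\<lambda>n. LINT \<omega>|M. c n (X \<omega>)) \<longlonglongrightarrow> (LINT \<omega>|M. 0)"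
  proof (rule integral_dominated_convergence[where w=w])
    show "(\<lambda>\<omega>. 0::real) \<in> borel_measurable M" by simp
    show "\<And>n. (\<lambda>\<omega>. c n (X \<omega>)) \<in> borel_measurable M" by measurable
    show "integrable M w" by (rule wi)
    show "AE \<omega> in M. (\<lambda>n. c n (X \<omega>)) \<longlonglongrightarrow> 0" using AEM by eventually_elim (rule lim)
    show "\<And>n. AE \<omega> in M. norm (c n (X \<omega>)) \<le> w \<omega>"
      using AEM by eventually_elim (use bound in \<open>simp add: w_def\<close>)
  qed
  moreover have "(LINT x|J.PX. c n x) = (LINT \<omega>|M. c n (X \<omega>))" for n
    unfolding J.PX_def by (rule integral_distr) auto
  ultimately have "(\<lambda>n. LINT x|J.PX. c n x) \<longlonglongrightarrow> 0" by simp
  then show ?thesis unfolding c_def .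
qed

end

context L3 begin

lemma int_PX_m2G2d: "\<theta> \<in> U \<Longrightarrow> integrable J.PX (\<lambda>x. maxnorm x ^ 2 * G2d (x \<bullet> snd \<theta>))"
  unfolding J.PX_def using int_m2G2d by (subst integrable_distr_eq) auto

lemma fatou_b:
  fixes \<theta> :: "nat \<Rightarrow> (real^'k) \<times> (real^'k)"
  assumes \<theta>U: "\<And>n. \<theta> n \<in> U" and rpos: "\<And>n. 0 < r n" and rdef: "\<And>n. r n = maxnorm2 (\<theta> n - th0)"
    and r0: "r \<longlonglongrightarrow> 0"
    and Vlim: "(\<lambda>n. (1 / r n) *\<^sub>R (snd (\<theta> n) - snd th0)) \<longlonglongrightarrow> V0"
    and blim: "(\<lambda>n. LINT x|J.PX. G2d (x \<bullet> snd (\<theta> n)) * (x \<bullet> (snd (\<theta> n) - snd th0))\<^sup>2 / (r n)\<^sup>2) \<longlonglongrightarrow> 0"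
  shows "V0 = 0"
proof -
  interpret PP: prob_space J.PX by (rule J.PX_prob)
  define b where "b n x = G2d (x \<bullet> snd (\<theta> n)) * (x \<bullet> (snd (\<theta> n) - snd th0))\<^sup>2 / (r n)\<^sup>2" for n x
  have bm[measurable]: "b n \<in> borel_measurable borel" for n unfolding b_def[abs_def] by measurable
  have mv: "maxnorm (snd (\<theta> n) - snd th0) \<le> r n" for n using maxnorm2_snd[of "\<theta> n - th0"] rdef by simp
  have b0: "0 \<le> b n x" for n x unfolding b_def using G2d_pos by (simp add: less_imp_le)
  have bi: "integrable J.PX (b n)" for n
  proof (rule Bochner_Integration.integrable_bound)
    show "integrable J.PX (\<lambda>x. (real CARD('k))\<^sup>2 * (maxnorm x ^ 2 * G2d (x \<bullet> snd (\<theta> n))))"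
      using int_PX_m2G2d[OF \<theta>U] by simp
    show "b n \<in> borel_measurable J.PX" by simp
    show "AE x in J.PX. norm (b n x) \<le> norm ((real CARD('k))\<^sup>2 * (maxnorm x ^ 2 * G2d (x \<bullet> snd (\<theta> n))))"
    proof (intro AE_I2)
      fix x :: "real^'k"
      have vb: "\<bar>x \<bullet> (snd (\<theta> n) - snd th0)\<bar> \<le> real CARD('k) * maxnorm x * r n" by (rule inner_sel_bound[OF mv])
      have "(x \<bullet> (snd (\<theta> n) - snd th0))\<^sup>2 \<le> (real CARD('k) * maxnorm x * r n)\<^sup>2"
        using vb by (metis abs_ge_zero power2_abs power_mono)
      then have "b n x \<le> G2d (x \<bullet> snd (\<theta> n)) * (real CARD('k) * maxnorm x * r n)\<^sup>2 / (r n)\<^sup>2"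
        unfolding b_def using G2d_pos by (intro divide_right_mono mult_left_mono) (auto simp: less_imp_le)
      also have "\<dots> = (real CARD('k))\<^sup>2 * (maxnorm x ^ 2 * G2d (x \<bullet> snd (\<theta> n)))"
        using rpos[of n] by (simp add: power2_eq_square field_simps)
      finally show "norm (b n x) \<le> norm ((real CARD('k))\<^sup>2 * (maxnorm x ^ 2 * G2d (x \<bullet> snd (\<theta> n))))"
        using b0[of n x] by simp
    qed
  qed
  have nnI: "(\<integral>\<^sup>+x. ennreal (b n x) \<partial>J.PX) = ennreal (LINT x|J.PX. b n x)" for n
    by (rule nn_integral_eq_integral[OF bi]) (simp add: b0)
  have "(\<lambda>n. ennreal (LINT x|J.PX. b n x)) \<longlonglongrightarrow> ennreal 0"
    by (rule tendsto_ennrealI) (use blim in \<open>simp add: b_def\<close>)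
  then have lim0: "liminf (\<lambda>n. \<integral>\<^sup>+x. ennreal (b n x) \<partial>J.PX) = 0"
    unfolding nnI by (intro lim_imp_Liminf) auto
  define L where "L x = G2d (x \<bullet> snd th0) * (x \<bullet> V0)\<^sup>2" for x
  have v0: "(\<lambda>n. maxnorm (snd (\<theta> n) - snd th0)) \<longlonglongrightarrow> 0"
    by (rule tendsto_sandwich[of "\<lambda>_. 0" _ _ r]) (use mv maxnorm_nonneg r0 in \<open>auto intro!: always_eventually\<close>)
  have plim: "(\<lambda>n. b n x) \<longlonglongrightarrow> L x" for x
  proof -
    have G: "(\<lambda>n. G2d (x \<bullet> snd (\<theta> n))) \<longlonglongrightarrow> G2d (x \<bullet> snd th0)"
      using inner_conv[OF v0, of x] continuous_on_tendsto_compose[OF cG2d] by auto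
    have I: "(\<lambda>n. x \<bullet> ((1 / r n) *\<^sub>R (snd (\<theta> n) - snd th0))) \<longlonglongrightarrow> x \<bullet> V0"
      by (intro tendsto_intros Vlim)
    have "b n x = G2d (x \<bullet> snd (\<theta> n)) * (x \<bullet> ((1 / r n) *\<^sub>R (snd (\<theta> n) - snd th0)))\<^sup>2" for n
    proof -
      have e: "x \<bullet> ((1 / r n) *\<^sub>R (snd (\<theta> n) - snd th0)) = (x \<bullet> (snd (\<theta> n) - snd th0)) / r n"
        by (simp only: inner_scaleR_right) simp
      show ?thesis unfolding b_def e by (simp add: power_divide)
    qed
    moreover have "(\<lambda>n. G2d (x \<bullet> snd (\<theta> n)) * (x \<bullet> ((1 / r n) *\<^sub>R (snd (\<theta> n) - snd th0)))\<^sup>2) \<longlonglongrightarrow> L x"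
      unfolding L_def by (intro tendsto_intros G I)
    ultimately show ?thesis by simp
  qed
  have liminf_eq: "liminf (\<lambda>n. ennreal (b n x)) = ennreal (L x)" for x
    by (intro lim_imp_Liminf tendsto_ennrealI plim) auto
  have "(\<integral>\<^sup>+x. ennreal (L x) \<partial>J.PX) = (\<integral>\<^sup>+x. liminf (\<lambda>n. ennreal (b n x)) \<partial>J.PX)"
    by (simp add: liminf_eq)
  also have "\<dots> \<le> liminf (\<lambda>n. \<integral>\<^sup>+x. ennreal (b n x) \<partial>J.PX)"
    by (rule nn_integral_liminf) simp
  also have "\<dots> = 0" by (rule lim0)
  finally have "(\<integral>\<^sup>+x. ennreal (L x) \<partial>J.PX) = 0" by simp
  then have "AE x in J.PX. ennreal (L x) = 0"
    by (subst (asm) nn_integral_0_iff_AE) (auto simp: L_def)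
  then have "AE x in J.PX. x \<bullet> V0 = 0"
  proof (rule AE_mp, intro AE_I2 impI)
    fix x assume "ennreal (L x) = 0"
    then have "L x \<le> 0" by (simp add: ennreal_eq_0_iff)
    moreover have "0 < G2d (x \<bullet> snd th0)" using G2d_pos by simp
    ultimately show "x \<bullet> V0 = 0"
      unfolding L_def by (metis mult_pos_pos not_le power2_less_0 zero_less_power2 linorder_neqE_linordered_idom)
  qed
  then show ?thesis by (rule pd_zero)
qed

lemma fatou_a:
  fixes \<theta> :: "nat \<Rightarrow> (real^'k) \<times> (real^'k)"
  assumes \<theta>U: "\<And>n. \<theta> n \<in> U" and rpos: "\<And>n. 0 < r n" and rdef: "\<And>n. r n = maxnorm2 (\<theta> n - th0)"
    and r0: "r \<longlonglongrightarrow> 0"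
    and Ulim: "(\<lambda>n. (1 / r n) *\<^sub>R (fst (\<theta> n) - fst th0)) \<longlonglongrightarrow> U0"
    and alim: "(\<lambda>n. LINT x|J.PX. A1 (\<theta> n) (fst (\<theta> n) - fst th0) x / (r n)\<^sup>2) \<longlonglongrightarrow> 0"
  shows "U0 = 0"
proof -
  interpret PP: prob_space J.PX by (rule J.PX_prob)
  define a where "a n x = A1 (\<theta> n) (fst (\<theta> n) - fst th0) x / (r n)\<^sup>2" for n x
  have am[measurable]: "a n \<in> borel_measurable borel" for n unfolding a_def[abs_def] by measurable
  have mu: "maxnorm (fst (\<theta> n) - fst th0) \<le> r n" for n using maxnorm2_fst[of "\<theta> n - th0"] rdef by simp
  have mv: "maxnorm (snd (\<theta> n) - snd th0) \<le> r n" for n using maxnorm2_snd[of "\<theta> n - th0"] rdef by simp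
  have ai: "integrable J.PX (a n)" for n
    unfolding a_def using rep1(2)[OF \<theta>U[of n], of "fst (\<theta> n) - fst th0"] by simp
  have alow: "(1 / \<alpha>) * G2 (x \<bullet> snd (\<theta> n)) * (s * (cond_cdf f x (x \<bullet> fst th0 + s) - cond_cdf f x (x \<bullet> fst th0))) / (r n)\<^sup>2 \<le> a n x"
    and phi0: "0 \<le> s * (cond_cdf f x (x \<bullet> fst th0 + s) - cond_cdf f x (x \<bullet> fst th0))"
    if g: "good x" and s_def: "s = x \<bullet> (fst (\<theta> n) - fst th0)" for n x s
  proof -
    note gf = good_facts2[OF g]
    show ph: "0 \<le> s * (cond_cdf f x (x \<bullet> fst th0 + s) - cond_cdf f x (x \<bullet> fst th0))"
    proof (cases "0 \<le> s")
      case True then show ?thesis using gf(8)[of "x \<bullet> fst th0" "x \<bullet> fst th0 + s"] by simp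
    next
      case False then show ?thesis using gf(8)[of "x \<bullet> fst th0 + s" "x \<bullet> fst th0"]
        by (simp add: mult_nonpos_nonpos)
    qed
    have "a n x = (1 / \<alpha>) * (\<alpha> * G1d (x \<bullet> fst (\<theta> n)) + G2 (x \<bullet> snd (\<theta> n))) * (s * (cond_cdf f x (x \<bullet> fst th0 + s) - cond_cdf f x (x \<bullet> fst th0))) / (r n)\<^sup>2"
      unfolding a_def decomp(1)[OF g] s_def ..
    moreover have le: "(1 / \<alpha>) * G2 (x \<bullet> snd (\<theta> n)) \<le> (1 / \<alpha>) * (\<alpha> * G1d (x \<bullet> fst (\<theta> n)) + G2 (x \<bullet> snd (\<theta> n)))"
      using alpha G1d_nn by (intro mult_left_mono) auto
    ultimately show "(1 / \<alpha>) * G2 (x \<bullet> snd (\<theta> n)) * (s * (cond_cdf f x (x \<bullet> fst th0 + s) - cond_cdf f x (x \<bullet> fst th0))) / (r n)\<^sup>2 \<le> a n x"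
      using divide_right_mono[OF mult_right_mono[OF le ph], of "(r n)\<^sup>2"] by simp
  qed
  have a0: "AE x in J.PX. 0 \<le> a n x" for n
    using AE_good
  proof eventually_elim
    case (elim x)
    have "0 \<le> (1 / \<alpha>) * G2 (x \<bullet> snd (\<theta> n)) * (x \<bullet> (fst (\<theta> n) - fst th0) * (cond_cdf f x (x \<bullet> fst th0 + x \<bullet> (fst (\<theta> n) - fst th0)) - cond_cdf f x (x \<bullet> fst th0))) / (r n)\<^sup>2"
    proof -
      have "0 \<le> (1 / \<alpha>) * G2 (x \<bullet> snd (\<theta> n))" using alpha G2_pos by (simp add: less_imp_le)
      from divide_nonneg_nonneg[OF mult_nonneg_nonneg[OF this phi0[OF elim refl, of n]], of "(r n)\<^sup>2"] show ?thesis by simp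
    qed
    then show ?case using alow[OF elim refl, of n] by linarith
  qed
  have nnI: "(\<integral>\<^sup>+x. ennreal (a n x) \<partial>J.PX) = ennreal (LINT x|J.PX. a n x)" for n
    by (rule nn_integral_eq_integral[OF ai a0])
  have "(\<lambda>n. ennreal (LINT x|J.PX. a n x)) \<longlonglongrightarrow> ennreal 0"
    by (rule tendsto_ennrealI) (use alim in \<open>simp add: a_def\<close>)
  then have lim0: "liminf (\<lambda>n. \<integral>\<^sup>+x. ennreal (a n x) \<partial>J.PX) = 0"
    unfolding nnI by (intro lim_imp_Liminf) auto
  have "(\<integral>\<^sup>+x. liminf (\<lambda>n. ennreal (a n x)) \<partial>J.PX) \<le> liminf (\<lambda>n. \<integral>\<^sup>+x. ennreal (a n x) \<partial>J.PX)"
    by (rule nn_integral_liminf) simp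
  then have "(\<integral>\<^sup>+x. liminf (\<lambda>n. ennreal (a n x)) \<partial>J.PX) = 0" using lim0 by simp
  then have AE0: "AE x in J.PX. liminf (\<lambda>n. ennreal (a n x)) = 0"
    by (subst (asm) nn_integral_0_iff_AE) auto
  have u0: "(\<lambda>n. maxnorm (fst (\<theta> n) - fst th0)) \<longlonglongrightarrow> 0"
    by (rule tendsto_sandwich[of "\<lambda>_. 0" _ _ r]) (use mu maxnorm_nonneg r0 in \<open>auto intro!: always_eventually\<close>)
  have v0: "(\<lambda>n. maxnorm (snd (\<theta> n) - snd th0)) \<longlonglongrightarrow> 0"
    by (rule tendsto_sandwich[of "\<lambda>_. 0" _ _ r]) (use mv maxnorm_nonneg r0 in \<open>auto intro!: always_eventually\<close>)
  have pos: "0 < liminf (\<lambda>n. ennreal (a n x))" if g: "good x" and nz: "x \<bullet> U0 \<noteq> 0" for x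
  proof -
    obtain c e where ce: "c > 0" "e > 0"
      "\<And>s. \<bar>s\<bar> \<le> e \<Longrightarrow> c * s\<^sup>2 \<le> s * (cond_cdf f x (x \<bullet> fst th0 + s) - cond_cdf f x (x \<bullet> fst th0))"
      using good_facts2(4)[OF g] by blast
    define L where "L = (c / \<alpha>) * G2 (x \<bullet> snd th0) * (x \<bullet> U0)\<^sup>2"
    have Lpos: "0 < L" unfolding L_def using ce alpha G2_pos nz by auto
    define low where "low n = (c / \<alpha>) * G2 (x \<bullet> snd (\<theta> n)) * (x \<bullet> ((1 / r n) *\<^sub>R (fst (\<theta> n) - fst th0)))\<^sup>2" for n
    have G: "(\<lambda>n. G2 (x \<bullet> snd (\<theta> n))) \<longlonglongrightarrow> G2 (x \<bullet> snd th0)"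
      using inner_conv[OF v0, of x] continuous_on_tendsto_compose[OF cG2] by auto
    have "low \<longlonglongrightarrow> L" unfolding low_def L_def by (intro tendsto_intros G Ulim)
    then have ev1: "eventually (\<lambda>n. L / 2 < low n) sequentially"
      using Lpos by (intro order_tendstoD(1)) auto
    have s0: "(\<lambda>n. x \<bullet> (fst (\<theta> n) - fst th0)) \<longlonglongrightarrow> 0"
      using inner_conv[OF u0, of x] by (simp add: inner_diff_right LIM_zero_iff)
    then have ev2: "eventually (\<lambda>n. \<bar>x \<bullet> (fst (\<theta> n) - fst th0)\<bar> \<le> e) sequentially"
    proof -
      have "eventually (\<lambda>n. \<bar>x \<bullet> (fst (\<theta> n) - fst th0)\<bar> < e) sequentially"
        by (rule order_tendstoD(2)[OF tendsto_rabs_zero[OF s0] ce(2)])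
      then show ?thesis by (rule eventually_mono) simp
    qed
    have "eventually (\<lambda>n. ennreal (L / 2) \<le> ennreal (a n x)) sequentially"
      using ev1 ev2
    proof eventually_elim
      case (elim n)
      define s where "s = x \<bullet> (fst (\<theta> n) - fst th0)"
      have e1: "(x \<bullet> ((1 / r n) *\<^sub>R (fst (\<theta> n) - fst th0)))\<^sup>2 = s\<^sup>2 / (r n)\<^sup>2"
        unfolding s_def by (simp only: inner_scaleR_right) (simp add: power_divide)
      have "low n = (1 / \<alpha>) * G2 (x \<bullet> snd (\<theta> n)) * (c * s\<^sup>2) / (r n)\<^sup>2"
        unfolding low_def e1 by (simp add: field_simps)
      also have "\<dots> \<le> (1 / \<alpha>) * G2 (x \<bullet> snd (\<theta> n)) * (s * (cond_cdf f x (x \<bullet> fst th0 + s) - cond_cdf f x (x \<bullet> fst th0))) / (r n)\<^sup>2"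
        using ce(3)[of s] elim(2) alpha G2_pos unfolding s_def
        by (intro divide_right_mono mult_left_mono) (auto simp: less_imp_le)
      also have "\<dots> \<le> a n x" by (rule alow[OF g]) (simp add: s_def)
      finally show ?case using elim(1) by (intro ennreal_leI) linarith
    qed
    then have "ennreal (L / 2) \<le> liminf (\<lambda>n. ennreal (a n x))"
      by (intro Liminf_bounded) auto
    moreover have "0 < ennreal (L / 2)" using Lpos by simp
    ultimately show ?thesis by (rule less_le_trans[rotated])
  qed
  have "AE x in J.PX. x \<bullet> U0 = 0"
    using AE0 AE_good
  proof eventually_elim
    case (elim x)
    show ?case using pos[OF elim(2)] elim(1) by (metis less_irrefl)
  qed
  then show ?thesis by (rule pd_zero)
qed

end

context L3 begin

lemma a_nonneg:
  assumes g: "good x"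
  shows "0 \<le> A1 \<theta> (fst \<theta> - fst th0) x"
proof -
  note gf = good_facts2[OF g]
  define s where "s = x \<bullet> (fst \<theta> - fst th0)"
  have ph: "0 \<le> s * (cond_cdf f x (x \<bullet> fst th0 + s) - cond_cdf f x (x \<bullet> fst th0))"
  proof (cases "0 \<le> s")
    case True then show ?thesis using gf(8)[of "x \<bullet> fst th0" "x \<bullet> fst th0 + s"] by simp
  next
    case False then show ?thesis using gf(8)[of "x \<bullet> fst th0 + s" "x \<bullet> fst th0"]
      by (simp add: mult_nonpos_nonpos)
  qed
  have gq: "0 \<le> (1 / \<alpha>) * (\<alpha> * G1d (x \<bullet> fst \<theta>) + G2 (x \<bullet> snd \<theta>))"
    using alpha G1d_nn G2_pos by (simp add: less_imp_le)
  show ?thesis unfolding decomp(1)[OF g] s_def[symmetric] using mult_nonneg_nonneg[OF gq ph] by simp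
qed

lemma b_int:
  assumes th: "\<theta> \<in> U" and rpos: "0 < r" and mv: "maxnorm (snd \<theta> - snd th0) \<le> r"
  shows "integrable J.PX (\<lambda>x. G2d (x \<bullet> snd \<theta>) * (x \<bullet> (snd \<theta> - snd th0))\<^sup>2 / r\<^sup>2)"
proof (rule Bochner_Integration.integrable_bound)
  show "integrable J.PX (\<lambda>x. (real CARD('k))\<^sup>2 * (maxnorm x ^ 2 * G2d (x \<bullet> snd \<theta>)))"
    using int_PX_m2G2d[OF th] by simp
  show "(\<lambda>x. G2d (x \<bullet> snd \<theta>) * (x \<bullet> (snd \<theta> - snd th0))\<^sup>2 / r\<^sup>2) \<in> borel_measurable J.PX" by simp
  show "AE x in J.PX. norm (G2d (x \<bullet> snd \<theta>) * (x \<bullet> (snd \<theta> - snd th0))\<^sup>2 / r\<^sup>2) \<le> norm ((real CARD('k))\<^sup>2 * (maxnorm x ^ 2 * G2d (x \<bullet> snd \<theta>)))"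
  proof (intro AE_I2)
    fix x :: "real^'k"
    have vb: "\<bar>x \<bullet> (snd \<theta> - snd th0)\<bar> \<le> real CARD('k) * maxnorm x * r" by (rule inner_sel_bound[OF mv])
    have "(x \<bullet> (snd \<theta> - snd th0))\<^sup>2 \<le> (real CARD('k) * maxnorm x * r)\<^sup>2"
      using vb by (metis abs_ge_zero power2_abs power_mono)
    then have "G2d (x \<bullet> snd \<theta>) * (x \<bullet> (snd \<theta> - snd th0))\<^sup>2 / r\<^sup>2 \<le> G2d (x \<bullet> snd \<theta>) * (real CARD('k) * maxnorm x * r)\<^sup>2 / r\<^sup>2"
      using G2d_pos by (intro divide_right_mono mult_left_mono) (auto simp: less_imp_le)
    also have "\<dots> = (real CARD('k))\<^sup>2 * (maxnorm x ^ 2 * G2d (x \<bullet> snd \<theta>))"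
      using rpos by (simp add: power2_eq_square field_simps)
    finally show "norm (G2d (x \<bullet> snd \<theta>) * (x \<bullet> (snd \<theta> - snd th0))\<^sup>2 / r\<^sup>2) \<le> norm ((real CARD('k))\<^sup>2 * (maxnorm x ^ 2 * G2d (x \<bullet> snd \<theta>)))"
      using G2d_pos by (simp add: less_imp_le)
  qed
qed

lemma main:
  "\<exists>a>0. \<exists>d>0. \<forall>th\<in>Th. maxnorm2 (th - th0) \<le> d \<longrightarrow>
           a * maxnorm2 (th - th0) \<le>
           maxnorm2 ((LINT \<omega>|M. psi1 \<alpha> G1d G2 (Y \<omega>) (X \<omega>) th),
                     (LINT \<omega>|M. psi2 \<alpha> G2d (Y \<omega>) (X \<omega>) th))"
proof (rule ccontr)
  assume neg: "\<not> ?thesis"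
  define lam1 where "lam1 th = (LINT \<omega>|M. psi1 \<alpha> G1d G2 (Y \<omega>) (X \<omega>) th)" for th
  define lam2 where "lam2 th = (LINT \<omega>|M. psi2 \<alpha> G2d (Y \<omega>) (X \<omega>) th)" for th
  have "\<forall>n::nat. \<exists>th\<in>Th. maxnorm2 (th - th0) \<le> min d0 (1 / Suc n) \<and> maxnorm2 (lam1 th, lam2 th) < (1 / Suc n) * maxnorm2 (th - th0)"
  proof
    fix n :: nat
    have p: "0 < 1 / real (Suc n)" "0 < min d0 (1 / real (Suc n))" using d0 by auto
    from neg have "\<not> (\<forall>th\<in>Th. maxnorm2 (th - th0) \<le> min d0 (1 / Suc n) \<longrightarrow>
           (1 / Suc n) * maxnorm2 (th - th0) \<le> maxnorm2 (lam1 th, lam2 th))"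
      unfolding lam1_def lam2_def using p by blast
    then show "\<exists>th\<in>Th. maxnorm2 (th - th0) \<le> min d0 (1 / Suc n) \<and> maxnorm2 (lam1 th, lam2 th) < (1 / Suc n) * maxnorm2 (th - th0)"
      by (auto simp: not_le)
  qed
  then obtain \<theta> where \<theta>: "\<And>n. \<theta> n \<in> Th" "\<And>n. maxnorm2 (\<theta> n - th0) \<le> min d0 (1 / Suc n)"
      "\<And>n. maxnorm2 (lam1 (\<theta> n), lam2 (\<theta> n)) < (1 / Suc n) * maxnorm2 (\<theta> n - th0)"
    by metis
  define r where "r n = maxnorm2 (\<theta> n - th0)" for n
  have rdef: "\<And>n. r n = maxnorm2 (\<theta> n - th0)" by (simp add: r_def)
  have rpos: "0 < r n" for n
  proof -
    have "0 < (1 / Suc n) * r n" using \<theta>(3)[of n] maxnorm2_nonneg[of "(lam1 (\<theta> n), lam2 (\<theta> n))"] by (simp add: r_def)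
    then show ?thesis by (simp add: zero_less_divide_iff)
  qed
  have \<theta>U: "\<theta> n \<in> U" for n using \<theta>(1,2)[of n] by (simp add: Ubar_def)
  have r0: "r \<longlonglongrightarrow> 0"
  proof (rule tendsto_sandwich[of "\<lambda>_. 0" _ _ "\<lambda>n. inverse (real (Suc n))"])
    show "\<forall>\<^sub>F n in sequentially. 0 \<le> r n" using rpos by (auto intro!: always_eventually less_imp_le)
    show "\<forall>\<^sub>F n in sequentially. r n \<le> inverse (real (Suc n))"
      using \<theta>(2) by (auto intro!: always_eventually simp: r_def divide_inverse)
  qed (insert LIMSEQ_inverse_real_of_nat, simp_all)
  define u where "u n = fst (\<theta> n) - fst th0" for n
  define v where "v n = snd (\<theta> n) - snd th0" for n
  have mu: "maxnorm (u n) \<le> r n" for n using maxnorm2_fst[of "\<theta> n - th0"] by (simp add: u_def r_def)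
  have mv: "maxnorm (v n) \<le> r n" for n using maxnorm2_snd[of "\<theta> n - th0"] by (simp add: v_def r_def)
  have rmax: "r n = max (maxnorm (u n)) (maxnorm (v n))" for n by (simp add: r_def maxnorm2_def u_def v_def)
  have l1: "maxnorm (lam1 (\<theta> n)) \<le> r n / Suc n" and l2: "maxnorm (lam2 (\<theta> n)) \<le> r n / Suc n" for n
    using \<theta>(3)[of n] maxnorm2_fst[of "(lam1 (\<theta> n), lam2 (\<theta> n))"] maxnorm2_snd[of "(lam1 (\<theta> n), lam2 (\<theta> n))"]
    by (auto simp: r_def)
  define aI where "aI n = (LINT x|J.PX. A1 (\<theta> n) (u n) x / (r n)\<^sup>2)" for n
  define bI where "bI n = (LINT x|J.PX. G2d (x \<bullet> snd (\<theta> n)) * (x \<bullet> v n)\<^sup>2 / (r n)\<^sup>2)" for n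
  define cI where "cI n = (LINT x|J.PX. G2d (x \<bullet> snd (\<theta> n)) * (x \<bullet> v n) * Rr (\<theta> n) x / (r n)\<^sup>2)" for n
  have cI0: "cI \<longlonglongrightarrow> 0" unfolding cI_def v_def by (rule c_lim[OF \<theta>U rpos rdef r0])
  have aI0: "0 \<le> aI n" for n
    unfolding aI_def u_def
    by (rule integral_nonneg_AE) (use AE_good in \<open>auto elim!: eventually_mono intro!: divide_nonneg_nonneg a_nonneg\<close>)
  have bI0: "0 \<le> bI n" for n
    unfolding bI_def using G2d_pos by (intro integral_nonneg_AE AE_I2 divide_nonneg_nonneg mult_nonneg_nonneg) (auto simp: less_imp_le)
  have sum_le: "aI n + bI n + cI n \<le> 2 * real CARD('k) / Suc n" for n
  proof -
    have rp: "0 < r n" by (rule rpos)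
    have i1: "integrable J.PX (A1 (\<theta> n) (u n))" by (rule rep1(2)[OF \<theta>U])
    have i2: "integrable J.PX (B2 (\<theta> n) (v n))" by (rule rep2(2)[OF \<theta>U])
    have ib: "integrable J.PX (\<lambda>x. G2d (x \<bullet> snd (\<theta> n)) * (x \<bullet> v n)\<^sup>2 / (r n)\<^sup>2)"
      unfolding v_def by (rule b_int[OF \<theta>U rp mv[unfolded v_def]])
    have AEB: "AE x in J.PX. B2 (\<theta> n) (v n) x / (r n)\<^sup>2 = G2d (x \<bullet> snd (\<theta> n)) * (x \<bullet> v n)\<^sup>2 / (r n)\<^sup>2 + G2d (x \<bullet> snd (\<theta> n)) * (x \<bullet> v n) * Rr (\<theta> n) x / (r n)\<^sup>2"
      using AE_good by eventually_elim (simp add: v_def decomp(2) add_divide_distrib)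
    have ic: "integrable J.PX (\<lambda>x. G2d (x \<bullet> snd (\<theta> n)) * (x \<bullet> v n) * Rr (\<theta> n) x / (r n)\<^sup>2)"
    proof (rule integrable_cong_AE_imp)
      show "integrable J.PX (\<lambda>x. B2 (\<theta> n) (v n) x / (r n)\<^sup>2 - G2d (x \<bullet> snd (\<theta> n)) * (x \<bullet> v n)\<^sup>2 / (r n)\<^sup>2)"
        using i2 ib by auto
      show "(\<lambda>x. G2d (x \<bullet> snd (\<theta> n)) * (x \<bullet> v n) * Rr (\<theta> n) x / (r n)\<^sup>2) \<in> borel_measurable J.PX" by simp
      show "AE x in J.PX. B2 (\<theta> n) (v n) x / (r n)\<^sup>2 - G2d (x \<bullet> snd (\<theta> n)) * (x \<bullet> v n)\<^sup>2 / (r n)\<^sup>2 = G2d (x \<bullet> snd (\<theta> n)) * (x \<bullet> v n) * Rr (\<theta> n) x / (r n)\<^sup>2"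
        using AEB by eventually_elim simp
    qed
    have "bI n + cI n = (LINT x|J.PX. B2 (\<theta> n) (v n) x / (r n)\<^sup>2)"
    proof -
      have "bI n + cI n = (LINT x|J.PX. G2d (x \<bullet> snd (\<theta> n)) * (x \<bullet> v n)\<^sup>2 / (r n)\<^sup>2 + G2d (x \<bullet> snd (\<theta> n)) * (x \<bullet> v n) * Rr (\<theta> n) x / (r n)\<^sup>2)"
        unfolding bI_def cI_def by (rule Bochner_Integration.integral_add[OF ib ic, symmetric])
      also have "\<dots> = (LINT x|J.PX. B2 (\<theta> n) (v n) x / (r n)\<^sup>2)"
        by (rule integral_cong_AE) (use AEB in \<open>auto elim!: eventually_mono\<close>)
      finally show ?thesis .
    qed
    also have "\<dots> = (v n \<bullet> lam2 (\<theta> n)) / (r n)\<^sup>2"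
      unfolding lam2_def rep2(1)[OF \<theta>U] by simp
    finally have bc: "bI n + cI n = (v n \<bullet> lam2 (\<theta> n)) / (r n)\<^sup>2" .
    have a: "aI n = (u n \<bullet> lam1 (\<theta> n)) / (r n)\<^sup>2"
      unfolding aI_def lam1_def rep1(1)[OF \<theta>U] by simp
    have e1: "u n \<bullet> lam1 (\<theta> n) \<le> real CARD('k) * (r n * (r n / Suc n))"
    proof -
      have "u n \<bullet> lam1 (\<theta> n) \<le> real CARD('k) * (maxnorm (u n) * maxnorm (lam1 (\<theta> n)))"
        using inner_maxnorm[of "u n" "lam1 (\<theta> n)"] by linarith
      also have "\<dots> \<le> real CARD('k) * (r n * (r n / Suc n))"
        using mu l1 maxnorm_nonneg rpos[of n] by (intro mult_left_mono mult_mono) (auto simp: less_imp_le)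
      finally show ?thesis .
    qed
    have e2: "v n \<bullet> lam2 (\<theta> n) \<le> real CARD('k) * (r n * (r n / Suc n))"
    proof -
      have "v n \<bullet> lam2 (\<theta> n) \<le> real CARD('k) * (maxnorm (v n) * maxnorm (lam2 (\<theta> n)))"
        using inner_maxnorm[of "v n" "lam2 (\<theta> n)"] by linarith
      also have "\<dots> \<le> real CARD('k) * (r n * (r n / Suc n))"
        using mv l2 maxnorm_nonneg rpos[of n] by (intro mult_left_mono mult_mono) (auto simp: less_imp_le)
      finally show ?thesis .
    qed
    have "aI n + bI n + cI n = (u n \<bullet> lam1 (\<theta> n) + v n \<bullet> lam2 (\<theta> n)) / (r n)\<^sup>2"
      using a bc by (simp add: add_divide_distrib)
    also have "\<dots> \<le> (2 * (real CARD('k) * (r n * (r n / Suc n)))) / (r n)\<^sup>2"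
      using e1 e2 by (intro divide_right_mono) (simp_all add: field_simps)
    also have "\<dots> = 2 * real CARD('k) / Suc n"
    proof -
      have aux: "2 * (k * (r * (r / s))) / r\<^sup>2 = 2 * k / s" if "r \<noteq> 0" "s \<noteq> 0" for k r s :: real
        using that by (simp add: power2_eq_square field_simps)
      show ?thesis by (rule aux) (use rp in auto)
    qed
    finally show ?thesis .
  qed
  have up0: "(\<lambda>n. 2 * real CARD('k) / Suc n - cI n) \<longlonglongrightarrow> 0"
  proof -
    have "(\<lambda>n. 2 * real CARD('k) * inverse (real (Suc n)) - cI n) \<longlonglongrightarrow> 2 * real CARD('k) * 0 - 0"
      by (intro tendsto_intros LIMSEQ_inverse_real_of_nat cI0)
    then show ?thesis by (simp add: divide_inverse)
  qed
  have aup: "aI n \<le> 2 * real CARD('k) / Suc n - cI n" for n using sum_le[of n] bI0[of n] by linarith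
  have bup: "bI n \<le> 2 * real CARD('k) / Suc n - cI n" for n using sum_le[of n] aI0[of n] by linarith
  have aIl: "aI \<longlonglongrightarrow> 0"
    by (rule tendsto_sandwich[OF _ _ tendsto_const up0]) (use aI0 aup in \<open>auto intro!: always_eventually\<close>)
  have bIl: "bI \<longlonglongrightarrow> 0"
    by (rule tendsto_sandwich[OF _ _ tendsto_const up0]) (use bI0 bup in \<open>auto intro!: always_eventually\<close>)
  define W where "W n = ((1 / r n) *\<^sub>R u n, (1 / r n) *\<^sub>R v n)" for n
  have mW: "maxnorm (fst (W n)) \<le> 1 \<and> maxnorm (snd (W n)) \<le> 1 \<and> (maxnorm (fst (W n)) = 1 \<or> maxnorm (snd (W n)) = 1)" for n
    using mu[of n] mv[of n] rmax[of n] rpos[of n] by (auto simp: W_def maxnorm_scale max_def split: if_splits)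
  have "bounded (range W)"
  proof (rule boundedI)
    fix y assume "y \<in> range W"
    then obtain n where y: "y = W n" by auto
    have "norm y \<le> norm (fst y) + norm (snd y)" using norm_Pair_le[of "fst y" "snd y"] by simp
    also have "\<dots> \<le> real CARD('k) * maxnorm (fst y) + real CARD('k) * maxnorm (snd y)"
      by (intro add_mono norm_le_maxnorm)
    also have "\<dots> \<le> real CARD('k) * 1 + real CARD('k) * 1"
      using mW[of n] y by (intro add_mono mult_left_mono) auto
    finally show "norm y \<le> 2 * real CARD('k)" by simp
  qed
  then obtain l \<sigma> where \<sigma>: "strict_mono \<sigma>" "(W \<circ> \<sigma>) \<longlonglongrightarrow> l"
    using bounded_imp_convergent_subsequence by blast
  have Wn1: "1 \<le> norm (W n)" for n
  proof -
    have "1 \<le> norm (fst (W n)) \<or> 1 \<le> norm (snd (W n))"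
      using mW[of n] maxnorm_le_norm[of "fst (W n)"] maxnorm_le_norm[of "snd (W n)"] by auto
    then show ?thesis using norm_fst_le[of "fst (W n)" "snd (W n)"] norm_snd_le[of "snd (W n)" "fst (W n)"] by auto
  qed
  have "1 \<le> norm l"
    by (rule tendsto_lowerbound[OF tendsto_norm[OF \<sigma>(2)]]) (use Wn1 in auto)
  have U0: "fst l = 0"
  proof (rule fatou_a[of "\<theta> \<circ> \<sigma>" "r \<circ> \<sigma>"])
    show "\<And>n. (\<theta> \<circ> \<sigma>) n \<in> U" using \<theta>U by simp
    show "\<And>n. 0 < (r \<circ> \<sigma>) n" using rpos by simp
    show "\<And>n. (r \<circ> \<sigma>) n = maxnorm2 ((\<theta> \<circ> \<sigma>) n - th0)" by (simp add: r_def)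
    show "(r \<circ> \<sigma>) \<longlonglongrightarrow> 0" by (rule LIMSEQ_subseq_LIMSEQ[OF r0 \<sigma>(1)])
    show "(\<lambda>n. (1 / (r \<circ> \<sigma>) n) *\<^sub>R (fst ((\<theta> \<circ> \<sigma>) n) - fst th0)) \<longlonglongrightarrow> fst l"
      using tendsto_fst[OF \<sigma>(2)] by (simp add: W_def u_def o_def)
    show "(\<lambda>n. LINT x|J.PX. A1 ((\<theta> \<circ> \<sigma>) n) (fst ((\<theta> \<circ> \<sigma>) n) - fst th0) x / ((r \<circ> \<sigma>) n)\<^sup>2) \<longlonglongrightarrow> 0"
      using LIMSEQ_subseq_LIMSEQ[OF aIl \<sigma>(1)] by (simp add: aI_def u_def o_def)
  qed
  have V0: "snd l = 0"
  proof (rule fatou_b[of "\<theta> \<circ> \<sigma>" "r \<circ> \<sigma>"])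
    show "\<And>n. (\<theta> \<circ> \<sigma>) n \<in> U" using \<theta>U by simp
    show "\<And>n. 0 < (r \<circ> \<sigma>) n" using rpos by simp
    show "\<And>n. (r \<circ> \<sigma>) n = maxnorm2 ((\<theta> \<circ> \<sigma>) n - th0)" by (simp add: r_def)
    show "(r \<circ> \<sigma>) \<longlonglongrightarrow> 0" by (rule LIMSEQ_subseq_LIMSEQ[OF r0 \<sigma>(1)])
    show "(\<lambda>n. (1 / (r \<circ> \<sigma>) n) *\<^sub>R (snd ((\<theta> \<circ> \<sigma>) n) - snd th0)) \<longlonglongrightarrow> snd l"
      using tendsto_snd[OF \<sigma>(2)] by (simp add: W_def v_def o_def)
    show "(\<lambda>n. LINT x|J.PX. G2d (x \<bullet> snd ((\<theta> \<circ> \<sigma>) n)) * (x \<bullet> (snd ((\<theta> \<circ> \<sigma>) n) - snd th0))\<^sup>2 / ((r \<circ> \<sigma>) n)\<^sup>2) \<longlonglongrightarrow> 0"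
      using LIMSEQ_subseq_LIMSEQ[OF bIl \<sigma>(1)] by (simp add: bI_def v_def o_def)
  qed
  have "l = 0" using U0 V0 by (simp add: prod_eq_iff)
  with \<open>1 \<le> norm l\<close> show False by simp
qed

end

theorem lemma3:
  fixes M :: "'a measure"
    and X :: "'a \<Rightarrow> real^'k" and Y :: "'a \<Rightarrow> real"
    and f :: "real^'k \<Rightarrow> real \<Rightarrow> real"
    and \<alpha> :: real
    and Th :: "((real^'k) \<times> (real^'k)) set" and th0 :: "(real^'k) \<times> (real^'k)"
    and G1 G1d G1dd cG2 G2 G2d G2dd a_fn :: "real \<Rightarrow> real"
    and d0 :: real
  assumes alpha: "0 < \<alpha>" "\<alpha> < 1"
    and prob: "prob_space M" and complete: "complete_measure M"
    and rvX: "X \<in> borel_measurable M" and rvY: "Y \<in> borel_measurable M"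
    \<comment> \<open>parameter space and model (M)\<close>
    and Th: "compact Th" "interior Th \<noteq> {}" "th0 \<in> Th"
    and dens: "is_cond_density M X Y f"
    and model: "AE x in distr M borel X.
                  quantile (cond_cdf f x) \<alpha> = x \<bullet> fst th0 \<and>
                  expected_shortfall (cond_cdf f x) \<alpha> = x \<bullet> snd th0"
    \<comment> \<open>(A-1)\<close>
    and second_mom: "AE x in distr M borel X. integrable lborel (\<lambda>y. y\<^sup>2 * f x y)"
    and dens_loc: "AE x in distr M borel X. \<exists>\<epsilon>>0.
                  (\<forall>y\<in>ball (x \<bullet> fst th0) \<epsilon>. 0 < f x y) \<and>
                  continuous_on (ball (x \<bullet> fst th0) \<epsilon>) (f x) \<and>
                  bounded (f x ` ball (x \<bullet> fst th0) \<epsilon>)"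
    \<comment> \<open>(A-2)\<close>
    and XX_int: "\<forall>i j. integrable M (\<lambda>\<omega>. X \<omega> $ i * X \<omega> $ j)"
    and XX_pd: "pos_def (\<chi> i j. LINT \<omega>|M. X \<omega> $ i * X \<omega> $ j)"
    \<comment> \<open>(A-3)\<close>
    and G1_d1: "\<forall>z. (G1 has_real_derivative G1d z) (at z)"
    and G1_d2: "\<forall>z. (G1d has_real_derivative G1dd z) (at z)"
    and G1_cont: "continuous_on UNIV G1dd"
    and G1_mono: "mono G1"
    and G1_int: "integrable M (\<lambda>\<omega>. G1 (Y \<omega>))"
    and G2_d1: "\<forall>z. (cG2 has_real_derivative G2 z) (at z)"
    and G2_d2: "\<forall>z. (G2 has_real_derivative G2d z) (at z)"
    and G2_d3: "\<forall>z. (G2d has_real_derivative G2dd z) (at z)"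
    and G2_cont: "continuous_on UNIV G2dd"
    and G2_pos: "\<forall>z. 0 < G2 z" and G2d_pos: "\<forall>z. 0 < G2d z"
    and a_int: "integrable M (\<lambda>\<omega>. a_fn (Y \<omega>))"
    \<comment> \<open>moment conditions\<close>
    and d0: "0 < d0"
    and m1: "integrable M (\<lambda>\<omega>. maxnorm (X \<omega>) ^ 3
              * (SUP \<tau>\<in>Ubar Th d0 th0. G1d (X \<omega> \<bullet> fst \<tau>))
              * (SUP \<tau>\<in>Ubar Th d0 th0. G1dd (X \<omega> \<bullet> fst \<tau>)))"
    and m2: "integrable M (\<lambda>\<omega>. maxnorm (X \<omega>) ^ 3
              * (SUP \<tau>\<in>Ubar Th d0 th0. G1d (X \<omega> \<bullet> fst \<tau>))
              * (SUP \<tau>\<in>Ubar Th d0 th0. G2d (X \<omega> \<bullet> snd \<tau>)))"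
    and m3: "integrable M (\<lambda>\<omega>. maxnorm (X \<omega>) ^ 3
              * (SUP \<tau>\<in>Ubar Th d0 th0. G2 (X \<omega> \<bullet> snd \<tau>))
              * (SUP \<tau>\<in>Ubar Th d0 th0. G1dd (X \<omega> \<bullet> fst \<tau>)))"
    and m4: "integrable M (\<lambda>\<omega>. maxnorm (X \<omega>) ^ 3
              * (SUP \<tau>\<in>Ubar Th d0 th0. G2 (X \<omega> \<bullet> snd \<tau>))
              * (SUP \<tau>\<in>Ubar Th d0 th0. G2d (X \<omega> \<bullet> snd \<tau>)))"
    and m5: "integrable M (\<lambda>\<omega>. maxnorm (X \<omega>) ^ 3
              * (SUP \<tau>\<in>Ubar Th d0 th0. (G1d (X \<omega> \<bullet> fst \<tau>))\<^sup>2))"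
    and m6: "integrable M (\<lambda>\<omega>. maxnorm (X \<omega>) ^ 3
              * (SUP \<tau>\<in>Ubar Th d0 th0. (G2 (X \<omega> \<bullet> snd \<tau>))\<^sup>2))"
    and m7: "integrable M (\<lambda>\<omega>. maxnorm (X \<omega>) ^ 3
              * (SUP \<tau>\<in>Ubar Th d0 th0. G1d (X \<omega> \<bullet> fst \<tau>) * G2 (X \<omega> \<bullet> snd \<tau>)))"
    and m8: "integrable M (\<lambda>\<omega>. maxnorm (X \<omega>) ^ 5
              * (SUP \<tau>\<in>Ubar Th d0 th0. G2d (X \<omega> \<bullet> snd \<tau>))
              * (SUP \<tau>\<in>Ubar Th d0 th0. G2dd (X \<omega> \<bullet> snd \<tau>)))"
    and m9: "integrable M (\<lambda>\<omega>. maxnorm (X \<omega>) ^ 5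
              * (SUP \<tau>\<in>Ubar Th d0 th0. G2d (X \<omega> \<bullet> snd \<tau>))\<^sup>2)"
    and m10: "integrable M (\<lambda>\<omega>. maxnorm (X \<omega>) ^ 4
              * (SUP \<tau>\<in>Ubar Th d0 th0. G2d (X \<omega> \<bullet> snd \<tau>))
              * (SUP \<tau>\<in>Ubar Th d0 th0. G2dd (X \<omega> \<bullet> snd \<tau>))
              * (LINT y|lborel. \<bar>y\<bar> * f (X \<omega>) y))"
    and m11: "\<forall>th\<in>Ubar Th d0 th0. integrable M (\<lambda>\<omega>. maxnorm (X \<omega>) ^ 3
              * G2d (X \<omega> \<bullet> snd th)
              * (SUP \<tau>\<in>Ubar Th d0 th0. G2d (X \<omega> \<bullet> snd \<tau>))
              * (LINT y|lborel. \<bar>y\<bar> * f (X \<omega>) y))"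
    and m12: "\<forall>th\<in>Ubar Th d0 th0. integrable M (\<lambda>\<omega>. maxnorm (X \<omega>) ^ 3
              * G2d (X \<omega> \<bullet> snd th)
              * (SUP \<tau>\<in>Ubar Th d0 th0. G2dd (X \<omega> \<bullet> snd \<tau>))
              * (LINT y|lborel. y\<^sup>2 * f (X \<omega>) y))"
    and m13: "integrable M (\<lambda>\<omega>. maxnorm (X \<omega>) ^ 3
              * (SUP \<tau>\<in>Ubar Th d0 th0. G2d (X \<omega> \<bullet> snd \<tau>))
              * (SUP \<tau>\<in>Ubar Th d0 th0. G2dd (X \<omega> \<bullet> snd \<tau>))
              * (LINT y|lborel. y\<^sup>2 * f (X \<omega>) y))"
  shows "\<exists>a>0. \<exists>d>0. \<forall>th\<in>Th. maxnorm2 (th - th0) \<le> d \<longrightarrow>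
           a * maxnorm2 (th - th0) \<le>
           maxnorm2 ((LINT \<omega>|M. psi1 \<alpha> G1d G2 (Y \<omega>) (X \<omega>) th),
                     (LINT \<omega>|M. psi2 \<alpha> G2d (Y \<omega>) (X \<omega>) th))"
proof -
  interpret L: L3 M X Y f \<alpha> Th th0 G1 G1d G1dd cG2 G2 G2d G2dd a_fn d0
    by (rule L3.intro) (fact assms)+
  show ?thesis by (rule L.main)
qed

end
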